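(* Let $(M,g)$ be a 4-dimensional Lorentzian (CQR)$_4$ manifold with fundamental vector $A$. Then at every point where $C_{jklm}\neq0$, $A$ is a null vector and the Weyl tensor is of Petrov type N with respect to $A$, i.e. $C_{jklm}A^m=0$.
   Context: $(M,g)$ is a connected Hausdorff Lorentzian manifold with Levi-Civita connection $\nabla$; indices raised/lowered with $g$, repeated indices summed. $R_{jklm}$ is the Riemann tensor, $R_{kl}=-R_{mkl}{}^m$, $R=R^m{}_m$, and the Weyl tensor (with $n=4$) is $$C_{jklm}=R_{jklm}+\tfrac{1}{n-2}\big(g_{mj}R_{kl}-g_{mk}R_{jl}+R_{mj}g_{kl}-R_{mk}g_{jl}\big)-\tfrac{R}{(n-1)(n-2)}\big(g_{mj}g_{kl}-g_{mk}g_{jl}\big).$$ (CQR)$_n$: $C_{jklm}\not\equiv 0$ and there is a non-zero vector field $A_i$ (fundamental vector) with $$\nabla_i C_{jklm}=2A_iC_{jklm}+A_jC_{iklm}+A_kC_{jilm}+A_lC_{jkim}+A_mC_{jkli}.$$ (Bel–Debever criterion) A non-zero Weyl tensor at a point is of Petrov type N with respect to a non-zero null vector $k$ if $C_{jklm}k^m=0$. *)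

theory Defs
  imports "HOL-Analysis.Analysis"
begin

text \<open>Local-coordinate (chart) setting: points of an open connected set U of R^4,
  tensor components indexed by the 4-element type 4.  Index conventions follow
  the paper: tensors with lower indices are stored as functions of the indices;
  the metric g x is the matrix (g_ij) at x, its inverse is (g^ij).\<close>

definition pd :: "(real^4 \<Rightarrow> real) \<Rightarrow> 4 \<Rightarrow> real^4 \<Rightarrow> real" where
  "pd f i x = frechet_derivative f (at x) (axis i 1)"

fun iter_pd :: "(real^4 \<Rightarrow> real) \<Rightarrow> 4 list \<Rightarrow> real^4 \<Rightarrow> real" where
  "iter_pd f [] = f"
| "iter_pd f (i # is) = pd (iter_pd f is) i"

definition smooth_fun_on :: "(real^4) set \<Rightarrow> (real^4 \<Rightarrow> real) \<Rightarrow> bool" where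
  "smooth_fun_on U f \<longleftrightarrow> (\<forall>is. iter_pd f is differentiable_on U)"

definition minkowski :: "real^4^4" where
  "minkowski = (\<chi> i j. if i = j then (if i = 0 then -1 else 1) else 0)"

definition lorentzian_metric_on :: "(real^4) set \<Rightarrow> (real^4 \<Rightarrow> real^4^4) \<Rightarrow> bool" where
  "lorentzian_metric_on U g \<longleftrightarrow>
     (\<forall>x\<in>U. transpose (g x) = g x \<and>
        (\<exists>P. invertible P \<and> g x = transpose P ** minkowski ** P)) \<and>
     (\<forall>i j. smooth_fun_on U (\<lambda>x. g x $ i $ j))"

definition ginv :: "(real^4 \<Rightarrow> real^4^4) \<Rightarrow> real^4 \<Rightarrow> 4 \<Rightarrow> 4 \<Rightarrow> real" where
  "ginv g x i j = matrix_inv (g x) $ i $ j"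

definition christoffel :: "(real^4 \<Rightarrow> real^4^4) \<Rightarrow> real^4 \<Rightarrow> 4 \<Rightarrow> 4 \<Rightarrow> 4 \<Rightarrow> real" where
  "christoffel g x a b c = (1/2) * (\<Sum>d\<in>UNIV. ginv g x a d *
      (pd (\<lambda>y. g y $ d $ b) c x + pd (\<lambda>y. g y $ d $ c) b x - pd (\<lambda>y. g y $ b $ c) d x))"

definition riem_up :: "(real^4 \<Rightarrow> real^4^4) \<Rightarrow> real^4 \<Rightarrow> 4 \<Rightarrow> 4 \<Rightarrow> 4 \<Rightarrow> 4 \<Rightarrow> real" where
  "riem_up g x a b c d =
     pd (\<lambda>y. christoffel g y a d b) c x - pd (\<lambda>y. christoffel g y a c b) d x
     + (\<Sum>e\<in>UNIV. christoffel g x a c e * christoffel g x e d b)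
     - (\<Sum>e\<in>UNIV. christoffel g x a d e * christoffel g x e c b)"

definition riem :: "(real^4 \<Rightarrow> real^4^4) \<Rightarrow> real^4 \<Rightarrow> 4 \<Rightarrow> 4 \<Rightarrow> 4 \<Rightarrow> 4 \<Rightarrow> real" where
  "riem g x j k l m = (\<Sum>e\<in>UNIV. g x $ j $ e * riem_up g x e k l m)"

definition ricci :: "(real^4 \<Rightarrow> real^4^4) \<Rightarrow> real^4 \<Rightarrow> 4 \<Rightarrow> 4 \<Rightarrow> real" where
  "ricci g x k l = - (\<Sum>m\<in>UNIV. \<Sum>p\<in>UNIV. ginv g x m p * riem g x m k l p)"

definition scal :: "(real^4 \<Rightarrow> real^4^4) \<Rightarrow> real^4 \<Rightarrow> real" where
  "scal g x = (\<Sum>m\<in>UNIV. \<Sum>l\<in>UNIV. ginv g x m l * ricci g x m l)"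

text \<open>Weyl tensor for n = 4.\<close>
definition weyl :: "(real^4 \<Rightarrow> real^4^4) \<Rightarrow> real^4 \<Rightarrow> 4 \<Rightarrow> 4 \<Rightarrow> 4 \<Rightarrow> 4 \<Rightarrow> real" where
  "weyl g x j k l m = riem g x j k l m
     + (1/2) * (g x $ m $ j * ricci g x k l - g x $ m $ k * ricci g x j l
                + ricci g x m j * g x $ k $ l - ricci g x m k * g x $ j $ l)
     - scal g x / 6 * (g x $ m $ j * g x $ k $ l - g x $ m $ k * g x $ j $ l)"

definition cov_weyl :: "(real^4 \<Rightarrow> real^4^4) \<Rightarrow> real^4 \<Rightarrow> 4 \<Rightarrow> 4 \<Rightarrow> 4 \<Rightarrow> 4 \<Rightarrow> 4 \<Rightarrow> real" where
  "cov_weyl g x i j k l m = pd (\<lambda>y. weyl g y j k l m) i x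
     - (\<Sum>p\<in>UNIV. christoffel g x p i j * weyl g x p k l m
                 + christoffel g x p i k * weyl g x j p l m
                 + christoffel g x p i l * weyl g x j k p m
                 + christoffel g x p i m * weyl g x j k l p)"

text \<open>(CQR)_4 on U with fundamental (co)vector field A (components A_i).\<close>
definition CQR4 :: "(real^4) set \<Rightarrow> (real^4 \<Rightarrow> real^4^4) \<Rightarrow> (real^4 \<Rightarrow> real^4) \<Rightarrow> bool" where
  "CQR4 U g A \<longleftrightarrow>
     (\<exists>x\<in>U. \<exists>j k l m. weyl g x j k l m \<noteq> 0) \<and>
     (\<exists>x\<in>U. A x \<noteq> 0) \<and>
     (\<forall>x\<in>U. \<forall>i j k l m. cov_weyl g x i j k l m =
        2 * A x $ i * weyl g x j k l m + A x $ j * weyl g x i k l m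
        + A x $ k * weyl g x j i l m + A x $ l * weyl g x j k i m
        + A x $ m * weyl g x j k l i)"

definition raise :: "(real^4 \<Rightarrow> real^4^4) \<Rightarrow> real^4 \<Rightarrow> real^4 \<Rightarrow> 4 \<Rightarrow> real" where
  "raise g x v m = (\<Sum>p\<in>UNIV. ginv g x m p * v $ p)"

end

theory Submission
  imports Defs
begin

lemma pd_has: "(f has_derivative f') (at x) \<Longrightarrow> pd f i x = f' (axis i 1)"
  unfolding pd_def using frechet_derivative_at by metis

lemma pd_hasD: "f differentiable (at x) \<Longrightarrow> (f has_derivative (\<lambda>h. frechet_derivative f (at x) h)) (at x)"
  using frechet_derivative_works by (metis eta_contract_eq)

lemma pd_add: "f differentiable (at x) \<Longrightarrow> g differentiable (at x) \<Longrightarrow>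
  pd (\<lambda>y. f y + g y) i x = pd f i x + pd g i x"
  apply (rule trans[OF pd_has[OF has_derivative_add[OF pd_hasD pd_hasD]]])
  by (auto simp: pd_def)

lemma pd_diff: "f differentiable (at x) \<Longrightarrow> g differentiable (at x) \<Longrightarrow>
  pd (\<lambda>y. f y - g y) i x = pd f i x - pd g i x"
  apply (rule trans[OF pd_has[OF has_derivative_diff[OF pd_hasD pd_hasD]]])
  by (auto simp: pd_def)

lemma pd_mult: "f differentiable (at x) \<Longrightarrow> g differentiable (at x) \<Longrightarrow>
  pd (\<lambda>y. f y * g y) i x = pd f i x * g x + f x * pd g i x"
  apply (rule trans[OF pd_has[OF has_derivative_mult[OF pd_hasD pd_hasD]]])
  by (auto simp: pd_def)

lemma pd_const: "pd (\<lambda>y. c) i x = 0"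
  by (rule trans[OF pd_has[OF has_derivative_const]]) simp

lemma pd_cmult: "f differentiable (at x) \<Longrightarrow> pd (\<lambda>y. c * f y) i x = c * pd f i x"
  by (simp add: pd_mult pd_const)

lemma pd_minus: "f differentiable (at x) \<Longrightarrow> pd (\<lambda>y. - f y) i x = - pd f i x"
  using pd_diff[of "\<lambda>y. 0" x f i] by (simp add: pd_const)

lemma pd_sum: "finite S \<Longrightarrow> (\<And>a. a \<in> S \<Longrightarrow> f a differentiable (at x)) \<Longrightarrow>
  pd (\<lambda>y. \<Sum>a\<in>S. f a y) i x = (\<Sum>a\<in>S. pd (f a) i x)"
proof (induction S rule: finite_induct)
  case empty
  then show ?case by (simp add: pd_const)
next
  case (insert a S)
  have "pd (\<lambda>y. \<Sum>a\<in>insert a S. f a y) i x = pd (\<lambda>y. f a y + (\<Sum>a\<in>S. f a y)) i x"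
    using insert by simp
  also have "\<dots> = pd (f a) i x + pd (\<lambda>y. \<Sum>a\<in>S. f a y) i x"
    apply (rule pd_add) using insert by (auto intro!: differentiable_sum)
  finally show ?case using insert by simp
qed

lemma pd_sum_UNIV: fixes f :: "'a::finite \<Rightarrow> real^4 \<Rightarrow> real" shows "(\<And>a. f a differentiable (at x)) \<Longrightarrow>
  pd (\<lambda>y. \<Sum>a\<in>UNIV. f a y) i x = (\<Sum>a\<in>UNIV. pd (f a) i x)"
  by (rule pd_sum) auto

lemma pd_local: assumes "open U" "x \<in> U" "\<And>y. y \<in> U \<Longrightarrow> f y = g y"
  shows "pd f i x = pd g i x"
proof -
  have "\<And>D. (f has_derivative D) (at x) \<longleftrightarrow> (g has_derivative D) (at x)"
    using has_derivative_transform_within_open[OF _ assms(1,2), of f _ UNIV g]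
      has_derivative_transform_within_open[OF _ assms(1,2), of g _ UNIV f] assms(3)
    by auto
  then show ?thesis unfolding pd_def frechet_derivative_def by simp
qed

lemma diff_local: assumes "open U" "x \<in> U" "\<And>y. y \<in> U \<Longrightarrow> f y = g y" "f differentiable (at x)"
  shows "g differentiable (at x)"
  using has_derivative_transform_within_open[OF _ assms(1,2), of f _ UNIV g] assms(3,4)
  unfolding differentiable_def by auto

lemma deriv_line:
  fixes f :: "real^4 \<Rightarrow> real"
  assumes "f differentiable (at (p + t *\<^sub>R v))"
  shows "((\<lambda>s. f (p + s *\<^sub>R v)) has_real_derivative (frechet_derivative f (at (p + t *\<^sub>R v)) v)) (at t)"
proof -
  have l: "linear (frechet_derivative f (at (p + t *\<^sub>R v)))"
    using assms frechet_derivative_works has_derivative_linear by blast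
  have "((\<lambda>s. p + s *\<^sub>R v) has_derivative (\<lambda>s. s *\<^sub>R v)) (at t)"
    by (auto intro!: derivative_eq_intros)
  from has_derivative_compose[OF this pd_hasD[OF assms]]
  have "((\<lambda>s. f (p + s *\<^sub>R v)) has_derivative (\<lambda>s. frechet_derivative f (at (p + t *\<^sub>R v)) (s *\<^sub>R v))) (at t)" .
  moreover have "(\<lambda>s. frechet_derivative f (at (p + t *\<^sub>R v)) (s *\<^sub>R v)) = (\<lambda>s. s * frechet_derivative f (at (p + t *\<^sub>R v)) v)"
    using linear_scale[OF l] by auto
  moreover have "(\<lambda>s. s * frechet_derivative f (at (p + t *\<^sub>R v)) v) = (*) (frechet_derivative f (at (p + t *\<^sub>R v)) v)"
    by (rule ext) (simp add: mult.commute)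
  ultimately show ?thesis unfolding has_field_derivative_def by simp
qed

lemma mvt_square:
  fixes f :: "real^4 \<Rightarrow> real"
  assumes U: "open U" "ball x d \<subseteq> U" and h: "h > 0" "2 * h < d"
    and df: "f differentiable_on U" and dfi: "pd f i differentiable_on U"
  shows "\<exists>p. dist p x < d \<and>
    f (x + h *\<^sub>R axis i 1 + h *\<^sub>R axis j 1) - f (x + h *\<^sub>R axis j 1) - f (x + h *\<^sub>R axis i 1) + f x
     = h * h * pd (pd f i) j p"
proof -
  let ?ei = "axis i (1::real) :: real^4" and ?ej = "axis j (1::real) :: real^4"
  have inU: "x + s *\<^sub>R ?ei + t *\<^sub>R ?ej \<in> U" "dist (x + s *\<^sub>R ?ei + t *\<^sub>R ?ej) x < d"
    if "0 \<le> s" "s \<le> h" "0 \<le> t" "t \<le> h" for s t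
  proof -
    have "dist (x + s *\<^sub>R ?ei + t *\<^sub>R ?ej) x = norm (s *\<^sub>R ?ei + t *\<^sub>R ?ej)"
      by (simp add: dist_norm)
    also have "\<dots> \<le> norm (s *\<^sub>R ?ei) + norm (t *\<^sub>R ?ej)" by (rule norm_triangle_ineq)
    also have "\<dots> \<le> h + h" using that by simp
    finally show "dist (x + s *\<^sub>R ?ei + t *\<^sub>R ?ej) x < d" using h by simp
    then show "x + s *\<^sub>R ?ei + t *\<^sub>R ?ej \<in> U" using U by (auto simp: dist_commute)
  qed
  have dat: "g differentiable (at y)" if "g differentiable_on U" "y \<in> U" for g y
    using that U(1) differentiable_on_eq_differentiable_at by blast
  define u where "u t = f (x + t *\<^sub>R ?ei + h *\<^sub>R ?ej) - f (x + t *\<^sub>R ?ei)" for t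
  have du: "(u has_real_derivative (pd f i (x + t *\<^sub>R ?ei + h *\<^sub>R ?ej) - pd f i (x + t *\<^sub>R ?ei))) (at t)"
    if "0 \<le> t" "t \<le> h" for t
  proof -
    have a: "x + t *\<^sub>R ?ei + h *\<^sub>R ?ej = (x + h *\<^sub>R ?ej) + t *\<^sub>R ?ei" by (simp add: algebra_simps)
    have b: "\<And>s. x + s *\<^sub>R ?ei + h *\<^sub>R ?ej = (x + h *\<^sub>R ?ej) + s *\<^sub>R ?ei" by (simp add: algebra_simps)
    have d1: "f differentiable (at ((x + h *\<^sub>R ?ej) + t *\<^sub>R ?ei))"
      using dat[OF df inU(1)[of t h]] that h a by simp
    have d2: "f differentiable (at (x + t *\<^sub>R ?ei))"
      using dat[OF df inU(1)[of t 0]] that h by simp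
    have "((\<lambda>s. f ((x + h *\<^sub>R ?ej) + s *\<^sub>R ?ei) - f (x + s *\<^sub>R ?ei)) has_real_derivative
        (frechet_derivative f (at ((x + h *\<^sub>R ?ej) + t *\<^sub>R ?ei)) ?ei - frechet_derivative f (at (x + t *\<^sub>R ?ei)) ?ei)) (at t)"
      by (intro DERIV_diff deriv_line d1 d2)
    then show ?thesis unfolding u_def pd_def a b .
  qed
  obtain xi where xi: "0 < xi" "xi < h" "u h - u 0 = (h - 0) * (pd f i (x + xi *\<^sub>R ?ei + h *\<^sub>R ?ej) - pd f i (x + xi *\<^sub>R ?ei))"
    using MVT2[of 0 h u, OF h(1) du] by auto
  define w where "w t = pd f i (x + xi *\<^sub>R ?ei + t *\<^sub>R ?ej)" for t
  have dw: "(w has_real_derivative (pd (pd f i) j (x + xi *\<^sub>R ?ei + t *\<^sub>R ?ej))) (at t)"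
    if "0 \<le> t" "t \<le> h" for t
  proof -
    have d1: "pd f i differentiable (at ((x + xi *\<^sub>R ?ei) + t *\<^sub>R ?ej))"
      using dat[OF dfi inU(1)[of xi t]] that xi by simp
    show ?thesis using deriv_line[OF d1] unfolding w_def pd_def by simp
  qed
  obtain eta where eta: "0 < eta" "eta < h" "w h - w 0 = (h - 0) * pd (pd f i) j (x + xi *\<^sub>R ?ei + eta *\<^sub>R ?ej)"
    using MVT2[of 0 h w, OF h(1) dw] by auto
  show ?thesis
  proof (intro exI conjI)
    show "dist (x + xi *\<^sub>R ?ei + eta *\<^sub>R ?ej) x < d" using inU(2)[of xi eta] xi eta by simp
    have "f (x + h *\<^sub>R ?ei + h *\<^sub>R ?ej) - f (x + h *\<^sub>R ?ej) - f (x + h *\<^sub>R ?ei) + f x = u h - u 0"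
      unfolding u_def by (simp add: algebra_simps)
    also have "\<dots> = h * (w h - w 0)" using xi unfolding w_def by simp
    also have "\<dots> = h * h * pd (pd f i) j (x + xi *\<^sub>R ?ei + eta *\<^sub>R ?ej)" using eta by simp
    finally show "f (x + h *\<^sub>R ?ei + h *\<^sub>R ?ej) - f (x + h *\<^sub>R ?ej) - f (x + h *\<^sub>R ?ei) + f x = h * h * pd (pd f i) j (x + xi *\<^sub>R ?ei + eta *\<^sub>R ?ej)" .
  qed
qed

lemma clairaut:
  fixes f :: "real^4 \<Rightarrow> real"
  assumes U: "open U" "x \<in> U" and df: "f differentiable_on U"
    and dfi: "pd f i differentiable_on U" and dfj: "pd f j differentiable_on U"
    and dij: "pd (pd f i) j differentiable_on U" and dji: "pd (pd f j) i differentiable_on U"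
  shows "pd (pd f i) j x = pd (pd f j) i x"
proof -
  let ?F1 = "pd (pd f i) j" and ?F2 = "pd (pd f j) i"
  have c1: "isCont ?F1 x" using differentiable_imp_continuous_on[OF dij] U continuous_on_eq_continuous_at by blast
  have c2: "isCont ?F2 x" using differentiable_imp_continuous_on[OF dji] U continuous_on_eq_continuous_at by blast
  have key: "\<bar>?F1 x - ?F2 x\<bar> \<le> 2 * e" if e: "e > 0" for e
  proof -
    obtain d1 where d1: "d1 > 0" "\<And>y. dist y x < d1 \<Longrightarrow> dist (?F1 y) (?F1 x) < e"
      using c1 e unfolding continuous_at_eps_delta by meson
    obtain d2 where d2: "d2 > 0" "\<And>y. dist y x < d2 \<Longrightarrow> dist (?F2 y) (?F2 x) < e"
      using c2 e unfolding continuous_at_eps_delta by meson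
    obtain d3 where d3: "d3 > 0" "ball x d3 \<subseteq> U" using U open_contains_ball_eq by meson
    define d where "d = min d1 (min d2 d3)"
    have dpos: "d > 0" using d1 d2 d3 by (simp add: d_def)
    have dle: "d \<le> d1" "d \<le> d2" "d \<le> d3" by (auto simp: d_def)
    have bd: "ball x d \<subseteq> U" using d3(2) subset_ball[OF dle(3)] by blast
    define h where "h = d / 3"
    have h: "h > 0" "2 * h < d" using dpos by (auto simp: h_def)
    obtain p1 where p1: "dist p1 x < d" "f (x + h *\<^sub>R axis i 1 + h *\<^sub>R axis j 1) - f (x + h *\<^sub>R axis j 1) - f (x + h *\<^sub>R axis i 1) + f x = h * h * ?F1 p1"
      using mvt_square[OF U(1) bd h df dfi] by blast
    obtain p2 where p2: "dist p2 x < d" "f (x + h *\<^sub>R axis j 1 + h *\<^sub>R axis i 1) - f (x + h *\<^sub>R axis i 1) - f (x + h *\<^sub>R axis j 1) + f x = h * h * ?F2 p2"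
      using mvt_square[OF U(1) bd h df dfj] by blast
    have sw: "x + h *\<^sub>R axis j 1 + h *\<^sub>R axis i 1 = x + h *\<^sub>R axis i 1 + h *\<^sub>R axis j 1"
      by (simp only: add.assoc add.commute[of "h *\<^sub>R axis j 1"])
    have "h * h * ?F1 p1 = h * h * ?F2 p2" using p1(2) p2(2) unfolding sw by linarith
    then have eq: "?F1 p1 = ?F2 p2" using h by simp
    have "dist p1 x < d1" using p1(1) dle by linarith
    then have a1: "\<bar>?F1 p1 - ?F1 x\<bar> < e" using d1(2)[of p1] by (simp add: dist_real_def)
    have "dist p2 x < d2" using p2(1) dle by linarith
    then have a2: "\<bar>?F2 p2 - ?F2 x\<bar> < e" using d2(2)[of p2] by (simp add: dist_real_def)
    show ?thesis using a1 a2 eq by linarith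
  qed
  have "\<bar>?F1 x - ?F2 x\<bar> \<le> 0 + 0"
  proof (rule field_le_epsilon)
    fix e :: real assume "0 < e"
    then have "\<bar>?F1 x - ?F2 x\<bar> \<le> 2 * (e/2)" using key[of "e/2"] by simp
    then show "\<bar>?F1 x - ?F2 x\<bar> \<le> 0 + 0 + e" by simp
  qed
  then show ?thesis by simp
qed

lemma pair_sym:
  fixes T :: "4 \<Rightarrow> 4 \<Rightarrow> 4 \<Rightarrow> 4 \<Rightarrow> real"
  assumes a12: "\<And>j k l m. T j k l m = - T k j l m"
    and a34: "\<And>j k l m. T j k l m = - T j k m l"
    and cyc: "\<And>j k l m. T j k l m + T j l m k + T j m k l = 0"
  shows "T j k l m = T l m j k"
proof -
  have a: "T j l m k = T l j k m" "T j m k l = T m j l k" "T k l m j = T l k j m" "T k m j l = T m k l j"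
    "T k j l m = - T j k l m" "T l m j k = T l m j k" "T l k m j = T k l j m"
    "T m k l j = T k m j l" "T m l j k = T l m k j" "T l j k m = T j l m k"
    using a12 a34 by metis+
  show ?thesis
    using cyc[of j k l m] cyc[of k l m j] cyc[of l m j k] cyc[of m j k l]
      a12[of k j l m] a12[of l m j k] a34[of l m j k] a12[of m l j k] a34[of m l k j]
      a12[of j l m k] a34[of l j m k] a12[of j m k l] a34[of m j k l]
      a12[of k l m j] a34[of l k m j] a12[of k m j l] a34[of m k j l]
      a12[of l j k m] a34[of j l k m] a12[of l k m j] a34[of k l m j]
      a12[of m j k l] a12[of m k l j] a34[of k m l j]
    by linarith
qed

definition Lg :: "(4 \<Rightarrow> 4 \<Rightarrow> 4 \<Rightarrow> real) \<Rightarrow> 4 \<Rightarrow> 4 \<Rightarrow> 4 \<Rightarrow> real" where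
  "Lg DG d b c = (DG c d b + DG b d c - DG d b c) / 2"
definition dLg :: "(4 \<Rightarrow> 4 \<Rightarrow> 4 \<Rightarrow> 4 \<Rightarrow> real) \<Rightarrow> 4 \<Rightarrow> 4 \<Rightarrow> 4 \<Rightarrow> 4 \<Rightarrow> real" where
  "dLg DDG l d b c = (DDG l c d b + DDG l b d c - DDG l d b c) / 2"
definition Rg :: "(4 \<Rightarrow> 4 \<Rightarrow> real) \<Rightarrow> (4 \<Rightarrow> 4 \<Rightarrow> 4 \<Rightarrow> real) \<Rightarrow> (4 \<Rightarrow> 4 \<Rightarrow> 4 \<Rightarrow> 4 \<Rightarrow> real) \<Rightarrow> 4 \<Rightarrow> 4 \<Rightarrow> 4 \<Rightarrow> 4 \<Rightarrow> real" where
  "Rg H DG DDG j k l m = dLg DDG l j m k - dLg DDG m j l k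
   - (\<Sum>p\<in>UNIV. \<Sum>q\<in>UNIV. H p q * Lg DG p j l * Lg DG q m k)
   + (\<Sum>p\<in>UNIV. \<Sum>q\<in>UNIV. H p q * Lg DG p j m * Lg DG q l k)"
definition ricg :: "(4 \<Rightarrow> 4 \<Rightarrow> real) \<Rightarrow> (4 \<Rightarrow> 4 \<Rightarrow> 4 \<Rightarrow> real) \<Rightarrow> (4 \<Rightarrow> 4 \<Rightarrow> 4 \<Rightarrow> 4 \<Rightarrow> real) \<Rightarrow> 4 \<Rightarrow> 4 \<Rightarrow> real" where
  "ricg H DG DDG k l = - (\<Sum>m\<in>UNIV. \<Sum>p\<in>UNIV. H m p * Rg H DG DDG m k l p)"
definition scg :: "(4 \<Rightarrow> 4 \<Rightarrow> real) \<Rightarrow> (4 \<Rightarrow> 4 \<Rightarrow> 4 \<Rightarrow> real) \<Rightarrow> (4 \<Rightarrow> 4 \<Rightarrow> 4 \<Rightarrow> 4 \<Rightarrow> real) \<Rightarrow> real" where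
  "scg H DG DDG = (\<Sum>m\<in>UNIV. \<Sum>l\<in>UNIV. H m l * ricg H DG DDG m l)"
definition Wg :: "(4 \<Rightarrow> 4 \<Rightarrow> real) \<Rightarrow> (4 \<Rightarrow> 4 \<Rightarrow> real) \<Rightarrow> (4 \<Rightarrow> 4 \<Rightarrow> 4 \<Rightarrow> real) \<Rightarrow> (4 \<Rightarrow> 4 \<Rightarrow> 4 \<Rightarrow> 4 \<Rightarrow> real) \<Rightarrow> 4 \<Rightarrow> 4 \<Rightarrow> 4 \<Rightarrow> 4 \<Rightarrow> real" where
  "Wg G H DG DDG j k l m = Rg H DG DDG j k l m
     + (1/2) * (G m j * ricg H DG DDG k l - G m k * ricg H DG DDG j l + ricg H DG DDG m j * G k l - ricg H DG DDG m k * G j l)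
     - scg H DG DDG / 6 * (G m j * G k l - G m k * G j l)"

locale alg =
  fixes G H :: "4 \<Rightarrow> 4 \<Rightarrow> real" and DG :: "4 \<Rightarrow> 4 \<Rightarrow> 4 \<Rightarrow> real"
    and DDG :: "4 \<Rightarrow> 4 \<Rightarrow> 4 \<Rightarrow> 4 \<Rightarrow> real"
  assumes Gs: "G a b = G b a" and Hs: "H a b = H b a"
    and HG: "(\<Sum>k\<in>UNIV. H a k * G k b) = (if a = b then 1 else 0)"
    and GH: "(\<Sum>k\<in>UNIV. G a k * H k b) = (if a = b then 1 else 0)"
    and DGs: "DG c a b = DG c b a"
    and DDGs: "DDG d c a b = DDG d c b a"
    and DDGc: "DDG d c a b = DDG c d a b"
begin

abbreviation "L \<equiv> Lg DG"
abbreviation "dL \<equiv> dLg DDG"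
abbreviation "R \<equiv> Rg H DG DDG"
abbreviation "ric \<equiv> ricg H DG DDG"
abbreviation "sc \<equiv> scg H DG DDG"
abbreviation "W \<equiv> Wg G H DG DDG"

lemma Ls: "L d b c = L d c b" unfolding Lg_def by (simp add: DGs algebra_simps)
lemma dLs: "dL l d b c = dL l d c b" unfolding dLg_def by (simp add: DDGs algebra_simps)

lemma R_a34: "R j k l m = - R j k m l"
  unfolding Rg_def by simp

lemma quad_swap: "(\<Sum>p\<in>UNIV. \<Sum>q\<in>UNIV. H p q * L p a b * L q c d) = (\<Sum>p\<in>UNIV. \<Sum>q\<in>UNIV. H p q * L p c d * L q a b)"
  by (subst sum.swap) (simp add: Hs mult_ac)

lemma R_a12: "R j k l m = - R k j l m"
proof -
  have l1: "dL l j m k + dL l k m j = DDG l m j k" unfolding dLg_def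
    unfolding DDGs[of l j m k] DDGs[of l k m j] DDGs[of l m k j] by (simp add: field_simps)
  have l2: "dL m j l k + dL m k l j = DDG m l j k" unfolding dLg_def
    unfolding DDGs[of m j l k] DDGs[of m k l j] DDGs[of m l k j] by (simp add: field_simps)
  have l3: "DDG l m j k = DDG m l j k" by (rule DDGc)
  have q1: "(\<Sum>p\<in>UNIV. \<Sum>q\<in>UNIV. H p q * L p k m * L q l j) = (\<Sum>p\<in>UNIV. \<Sum>q\<in>UNIV. H p q * L p j l * L q m k)"
    using quad_swap[of k m l j] by (simp add: Ls)
  have q2: "(\<Sum>p\<in>UNIV. \<Sum>q\<in>UNIV. H p q * L p k l * L q m j) = (\<Sum>p\<in>UNIV. \<Sum>q\<in>UNIV. H p q * L p j m * L q l k)"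
    using quad_swap[of k l m j] by (simp add: Ls)
  show ?thesis unfolding Rg_def using l1 l2 l3 q1 q2 by linarith
qed

lemma R_cyc: "R j k l m + R j l m k + R j m k l = 0"
proof -
  have e: "\<And>a b c d. L q a b * L r c d = L q b a * L r d c" for q r by (simp add: Ls)
  show ?thesis unfolding Rg_def by (simp add: dLs Ls algebra_simps)
qed

lemma R_pair: "R j k l m = R l m j k"
  by (rule pair_sym) (auto intro: R_a12 R_a34 R_cyc)

lemma sumdelta1: "(\<Sum>k\<in>UNIV. (if (a::4) = k then 1 else 0) * f k) = (f a :: real)"
proof -
  have "(\<Sum>k\<in>UNIV. (if a = k then 1 else 0) * f k) = (\<Sum>k\<in>UNIV. if a = k then f k else 0)"
    by (rule sum.cong) auto
  then show ?thesis by (simp add: sum.delta')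
qed
lemma sumdelta2: "(\<Sum>k\<in>UNIV. (if k = (a::4) then 1 else 0) * f k) = (f a :: real)"
proof -
  have "(\<Sum>k\<in>UNIV. (if k = a then 1 else 0) * f k) = (\<Sum>k\<in>UNIV. if k = a then f k else 0)"
    by (rule sum.cong) auto
  then show ?thesis by (simp add: sum.delta)
qed

lemma ric_sym: "ric k l = ric l k"
proof -
  have e: "R m k l p = R p l k m" for m p
    using R_pair[of m k l p] R_a12[of l p m k] R_a34[of p l m k] by simp
  have "(\<Sum>m\<in>UNIV. \<Sum>p\<in>UNIV. H m p * R m k l p) = (\<Sum>m\<in>UNIV. \<Sum>p\<in>UNIV. H m p * R p l k m)"
    by (simp add: e)
  also have "\<dots> = (\<Sum>p\<in>UNIV. \<Sum>m\<in>UNIV. H m p * R p l k m)" by (rule sum.swap)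
  also have "\<dots> = (\<Sum>m\<in>UNIV. \<Sum>p\<in>UNIV. H m p * R m l k p)" by (simp add: Hs)
  finally show ?thesis unfolding ricg_def by simp
qed

lemma W_a12: "W j k l m = - W k j l m"
  unfolding Wg_def using R_a12[of j k l m] by (simp add: algebra_simps)

lemma W_a34: "W j k l m = - W j k m l"
  unfolding Wg_def R_a34[of j k l m] Gs[of m j] Gs[of m k] Gs[of k j] Gs[of l j] Gs[of l k]
    ric_sym[of m j] ric_sym[of m k] ric_sym[of k j] ric_sym[of l j] ric_sym[of l k]
  by (simp add: algebra_simps)

lemma W_cyc: "W j k l m + W j l m k + W j m k l = 0"
proof -
  have "R j k l m + R j l m k + R j m k l = 0" by (rule R_cyc)
  then show ?thesis
    unfolding Wg_def Gs[of m j] Gs[of m k] Gs[of k j] Gs[of l j] Gs[of l k] Gs[of m l]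
      ric_sym[of m j] ric_sym[of m k] ric_sym[of k j] ric_sym[of l j] ric_sym[of l k] ric_sym[of m l]
    by (simp add: algebra_simps)
qed

lemma W_pair: "W j k l m = W l m j k"
  by (rule pair_sym) (auto intro: W_a12 W_a34 W_cyc)

lemma HG': "(\<Sum>k\<in>UNIV. G b k * H k a) = (if a = b then 1 else 0)"
  using GH[of b a] by auto

lemma s1: "(\<Sum>j\<in>UNIV. \<Sum>m\<in>UNIV. H j m * G m j) = 4"
  by (simp add: HG)
lemma s2: "(\<Sum>j\<in>UNIV. \<Sum>m\<in>UNIV. H j m * (G m k * X j)) = X k"
proof -
  have "(\<Sum>j\<in>UNIV. \<Sum>m\<in>UNIV. H j m * (G m k * X j)) = (\<Sum>j\<in>UNIV. (\<Sum>m\<in>UNIV. H j m * G m k) * X j)"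
    by (simp add: sum_distrib_right sum_distrib_left mult_ac)
  also have "\<dots> = X k" by (simp add: HG sumdelta1 sumdelta2)
  finally show ?thesis .
qed
lemma s4: "(\<Sum>j\<in>UNIV. \<Sum>m\<in>UNIV. H j m * (X m * G j l)) = X l"
proof -
  have "(\<Sum>j\<in>UNIV. \<Sum>m\<in>UNIV. H j m * (X m * G j l)) = (\<Sum>m\<in>UNIV. \<Sum>j\<in>UNIV. H j m * (X m * G j l))"
    by (rule sum.swap)
  also have "\<dots> = (\<Sum>m\<in>UNIV. (\<Sum>j\<in>UNIV. H m j * G j l) * X m)"
    by (simp add: sum_distrib_right sum_distrib_left mult_ac Hs)
  also have "\<dots> = X l" by (simp add: HG sumdelta1 sumdelta2)
  finally show ?thesis .
qed
lemma s3: "(\<Sum>j\<in>UNIV. \<Sum>m\<in>UNIV. H j m * ric m j) = sc"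
  unfolding scg_def by (simp add: ric_sym)

lemma lin_sum: "(\<Sum>j\<in>UNIV. \<Sum>m\<in>UNIV. H j m * (c * X j m)) = c * (\<Sum>j\<in>UNIV. \<Sum>m\<in>UNIV. H j m * X j m)"
  by (simp add: sum_distrib_left mult_ac)

lemma W_trace: "(\<Sum>j\<in>UNIV. \<Sum>m\<in>UNIV. H j m * W j k l m) = 0"
proof -
  have pw: "H j m * W j k l m = H j m * R j k l m + (1/2) * (ric k l * (H j m * G m j))
     - (1/2) * (H j m * (G m k * ric j l)) + (1/2) * G k l * (H j m * ric m j)
     - (1/2) * (H j m * (ric m k * G j l)) - sc/6 * G k l * (H j m * G m j)
     + sc / 6 * (H j m * (G m k * G j l))" for j m
    unfolding Wg_def by (simp add: algebra_simps)
  have "(\<Sum>j\<in>UNIV. \<Sum>m\<in>UNIV. H j m * W j k l m) =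
     (\<Sum>j\<in>UNIV. \<Sum>m\<in>UNIV. H j m * R j k l m) + (1/2) * ric k l * (\<Sum>j\<in>UNIV. \<Sum>m\<in>UNIV. H j m * G m j)
     - (1/2) * (\<Sum>j\<in>UNIV. \<Sum>m\<in>UNIV. H j m * (G m k * ric j l)) + (1/2) * G k l * (\<Sum>j\<in>UNIV. \<Sum>m\<in>UNIV. H j m * ric m j)
     - (1/2) * (\<Sum>j\<in>UNIV. \<Sum>m\<in>UNIV. H j m * (ric m k * G j l)) - sc/6 * G k l * (\<Sum>j\<in>UNIV. \<Sum>m\<in>UNIV. H j m * G m j)
     + sc / 6 * (\<Sum>j\<in>UNIV. \<Sum>m\<in>UNIV. H j m * (G m k * G j l))"
    unfolding pw by (simp add: sum.distrib sum_subtractf sum_distrib_left mult.assoc)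
  also have "\<dots> = - ric k l + (1/2) * ric k l * 4 - (1/2) * ric k l + (1/2) * G k l * sc
     - (1/2) * ric l k - sc/6 * G k l * 4 + sc/6 * G k l"
    using s1 s2[of k "\<lambda>j. ric j l"] s3 s4[of "\<lambda>m. ric m k" l] s2[of k "\<lambda>j. G j l"]
    unfolding ricg_def by simp
  also have "\<dots> = 0" using ric_sym[of l k] by simp
  finally show ?thesis .
qed

end

lemma cqr_alg:
  fixes T :: "4 \<Rightarrow> 4 \<Rightarrow> 4 \<Rightarrow> 4 \<Rightarrow> real" and H :: "4 \<Rightarrow> 4 \<Rightarrow> real" and A :: "4 \<Rightarrow> real"
  assumes a12: "\<And>j k l m. T j k l m = - T k j l m"
    and a34: "\<And>j k l m. T j k l m = - T j k m l"
    and cyc: "\<And>j k l m. T j k l m + T j l m k + T j m k l = 0"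
    and tr: "\<And>k l. (\<Sum>j\<in>UNIV. \<Sum>m\<in>UNIV. H j m * T j k l m) = 0"
    and Hs: "\<And>a b. H a b = H b a"
    and hyp: "\<And>i k l. (\<Sum>j\<in>UNIV. \<Sum>m\<in>UNIV. H j m * (2 * A i * T j k l m + A j * T i k l m
        + A k * T j i l m + A l * T j k i m + A m * T j k l i)) = 0"
  shows "(\<Sum>m\<in>UNIV. T j k l m * (\<Sum>p\<in>UNIV. H m p * A p)) = 0"
proof -
  define a where "a m = (\<Sum>p\<in>UNIV. H m p * A p)" for m
  define P where "P i k l = (\<Sum>m\<in>UNIV. T i k l m * a m)" for i k l
  have pair: "T j k l m = T l m j k" for j k l m by (rule pair_sym) (auto intro: a12 a34 cyc)
  have lin: "(\<Sum>j\<in>UNIV. \<Sum>m\<in>UNIV. H j m * (c * X j m)) = c * (\<Sum>j\<in>UNIV. \<Sum>m\<in>UNIV. H j m * X j m)" for c X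
    by (simp add: sum_distrib_left mult_ac)
  have e1: "(\<Sum>j\<in>UNIV. \<Sum>m\<in>UNIV. H j m * (A j * T i k l m)) = P i k l" for i k l
  proof -
    have "(\<Sum>j\<in>UNIV. \<Sum>m\<in>UNIV. H j m * (A j * T i k l m)) = (\<Sum>m\<in>UNIV. \<Sum>j\<in>UNIV. H j m * (A j * T i k l m))"
      by (rule sum.swap)
    also have "\<dots> = (\<Sum>m\<in>UNIV. T i k l m * (\<Sum>j\<in>UNIV. H m j * A j))"
      by (simp add: sum_distrib_left mult_ac Hs)
    finally show ?thesis unfolding P_def a_def .
  qed
  have e2: "(\<Sum>j\<in>UNIV. \<Sum>m\<in>UNIV. H j m * (A m * T j k l i)) = (\<Sum>j\<in>UNIV. a j * T j k l i)" for i k l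
    unfolding a_def by (simp add: sum_distrib_left sum_distrib_right mult_ac)
  have PQ: "P i k l + (\<Sum>j\<in>UNIV. a j * T j k l i) = 0" for i k l
  proof -
    have "(\<Sum>j\<in>UNIV. \<Sum>m\<in>UNIV. H j m * (2 * A i * T j k l m + A j * T i k l m
        + A k * T j i l m + A l * T j k i m + A m * T j k l i)) =
      2 * A i * (\<Sum>j\<in>UNIV. \<Sum>m\<in>UNIV. H j m * T j k l m)
      + (\<Sum>j\<in>UNIV. \<Sum>m\<in>UNIV. H j m * (A j * T i k l m))
      + A k * (\<Sum>j\<in>UNIV. \<Sum>m\<in>UNIV. H j m * T j i l m)
      + A l * (\<Sum>j\<in>UNIV. \<Sum>m\<in>UNIV. H j m * T j k i m)
      + (\<Sum>j\<in>UNIV. \<Sum>m\<in>UNIV. H j m * (A m * T j k l i))"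
      by (simp add: distrib_left sum.distrib lin mult.assoc)
    then show ?thesis using hyp[of i k l] tr[of k l] tr[of i l] tr[of k i] e1 e2 by simp
  qed
  have Q: "(\<Sum>j\<in>UNIV. a j * T j k l i) = - P l i k" for i k l
  proof -
    have e: "T j k l i = - T l i k j" for j using pair[of j k l i] a34[of l i j k] by simp
    have "(\<Sum>j\<in>UNIV. a j * T j k l i) = (\<Sum>j\<in>UNIV. - (T l i k j * a j))"
      by (rule sum.cong) (simp_all only: e mult.commute mult_minus_right)
    then show ?thesis unfolding P_def by (simp add: sum_negf)
  qed
  have P1: "P i k l = P l i k" for i k l using PQ[of i k l] Q[of k l i] by simp
  have Pa12: "P i k l = - P k i l" for i k l
  proof -
    have "P i k l = (\<Sum>m\<in>UNIV. - (T k i l m * a m))" unfolding P_def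
      by (rule sum.cong) (use a12[of i k l] in auto)
    then show ?thesis unfolding P_def by (simp add: sum_negf)
  qed
  have Pc: "P i k l - P i l k + P k l i = 0" for i k l
  proof -
    have "(\<Sum>m\<in>UNIV. (T i k l m + T i l m k + T i m k l) * a m) = 0"
      by (rule sum.neutral) (use cyc in auto)
    moreover have "(\<Sum>m\<in>UNIV. (T i k l m + T i l m k + T i m k l) * a m)
        = (\<Sum>m\<in>UNIV. T i k l m * a m - T i l k m * a m + T k l i m * a m)"
    proof (rule sum.cong)
      fix m
      have "T i l m k = - T i l k m" by (rule a34)
      moreover have "T i m k l = T k l i m" by (rule pair)
      ultimately show "(T i k l m + T i l m k + T i m k l) * a m = T i k l m * a m - T i l k m * a m + T k l i m * a m"
        by (simp add: algebra_simps)
    qed simp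
    ultimately show ?thesis unfolding P_def by (simp add: sum.distrib sum_subtractf)
  qed
  have "P j k l = 0"
    using Pc[of j k l] P1[of j k l] P1[of k l j] P1[of l j k] Pa12[of l j k] by linarith
  then show ?thesis unfolding P_def a_def .
qed

lemma sumd1: "(\<Sum>k\<in>UNIV. (if (a::'a::finite) = k then 1 else 0) * f k) = (f a :: real)"
proof -
  have "(\<Sum>k\<in>UNIV. (if a = k then 1 else 0) * f k) = (\<Sum>k\<in>UNIV. if a = k then f k else 0)"
    by (rule sum.cong) auto
  then show ?thesis by simp
qed
lemma sumd2: "(\<Sum>k\<in>UNIV. (if k = (a::'a::finite) then 1 else 0) * f k) = (f a :: real)"
proof -
  have "(\<Sum>k\<in>UNIV. (if k = a then 1 else 0) * f k) = (\<Sum>k\<in>UNIV. if k = a then f k else 0)"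
    by (rule sum.cong) auto
  then show ?thesis by simp
qed

definition bf :: "(4 \<Rightarrow> 4 \<Rightarrow> real) \<Rightarrow> real^4 \<Rightarrow> real^4 \<Rightarrow> real" where
  "bf G u v = (\<Sum>i\<in>UNIV. \<Sum>j\<in>UNIV. u$i * G i j * v$j)"

lemma bf_sym: assumes "\<And>a b. G a b = G b a" shows "bf G u v = bf G v u"
proof -
  have "bf G v u = (\<Sum>j\<in>UNIV. \<Sum>i\<in>UNIV. v$i * G i j * u$j)" unfolding bf_def by (rule sum.swap)
  also have "\<dots> = bf G u v" unfolding bf_def using assms by (simp add: mult_ac)
  finally show ?thesis by simp
qed

lemma bf_right: "bf G u v = (\<Sum>j\<in>UNIV. (\<Sum>i\<in>UNIV. u$i * G i j) * v$j)"
  unfolding bf_def by (subst sum.swap) (simp add: sum_distrib_right)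

lemma bf_add2: "bf G u (v + w) = bf G u v + bf G u w"
  unfolding bf_right by (simp add: distrib_left sum.distrib)
lemma bf_diff2: "bf G u (v - w) = bf G u v - bf G u w"
  unfolding bf_right by (simp add: right_diff_distrib sum_subtractf)
lemma bf_scale2: "bf G u (c *\<^sub>R v) = c * bf G u v"
  unfolding bf_right by (simp add: sum_distrib_left mult_ac)
lemma bf_sum2: "finite S \<Longrightarrow> bf G u (\<Sum>s\<in>S. f s) = (\<Sum>s\<in>S. bf G u (f s))"
  by (induction S rule: finite_induct) (simp_all add: bf_add2, simp add: bf_right)

lemma bf_axis: "bf G u (axis k 1) = (\<Sum>i\<in>UNIV. u$i * G i k)"
  unfolding bf_right by (simp add: axis_def if_distrib cong: if_cong)

context
  fixes G H :: "4 \<Rightarrow> 4 \<Rightarrow> real"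
  assumes Gs: "\<And>a b. G a b = G b a"
    and HG: "\<And>a b. (\<Sum>k\<in>UNIV. H a k * G k b) = (if a = b then 1 else 0)"
begin

lemma bf_add1: "bf G (v + w) u = bf G v u + bf G w u"
  by (simp only: bf_sym[OF Gs, where u="v+w" and v=u] bf_add2 bf_sym[OF Gs, where u=u and v=v] bf_sym[OF Gs, where u=u and v=w])
lemma bf_scale1: "bf G (c *\<^sub>R v) u = c * bf G v u"
  by (simp only: bf_sym[OF Gs, where u="c *\<^sub>R v" and v=u] bf_scale2 bf_sym[OF Gs, where u=u and v=v])

lemma nondeg: assumes "\<And>k. bf G x (axis k 1) = 0" shows "x = 0"
proof -
  have "x$m = 0" for m
  proof -
    have "x$m = (\<Sum>i\<in>UNIV. (if m = i then 1 else 0) * x$i)"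
      by (simp only: sumd1)
    also have "\<dots> = (\<Sum>i\<in>UNIV. (\<Sum>k\<in>UNIV. H m k * G k i) * x$i)" by (simp add: HG)
    also have "\<dots> = (\<Sum>i\<in>UNIV. \<Sum>k\<in>UNIV. H m k * (G k i * x$i))"
      by (simp add: sum_distrib_right sum_distrib_left mult_ac)
    also have "\<dots> = (\<Sum>k\<in>UNIV. \<Sum>i\<in>UNIV. H m k * (G k i * x$i))" by (rule sum.swap)
    also have "\<dots> = (\<Sum>k\<in>UNIV. H m k * (\<Sum>i\<in>UNIV. x$i * G i k))"
      by (simp add: sum_distrib_left mult_ac Gs)
    also have "\<dots> = 0" using assms by (simp add: bf_axis)
    finally show ?thesis .
  qed
  then show ?thesis by (simp add: vec_eq_iff)
qed

lemma ext_orth: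
  assumes fin: "finite S" and card: "card S < 4"
    and nn: "\<And>s. s \<in> S \<Longrightarrow> bf G s s \<noteq> 0"
    and orth: "\<And>s t. s \<in> S \<Longrightarrow> t \<in> S \<Longrightarrow> s \<noteq> t \<Longrightarrow> bf G s t = 0"
  shows "\<exists>x. bf G x x \<noteq> 0 \<and> (\<forall>s\<in>S. bf G s x = 0)"
proof (rule ccontr)
  assume neg: "\<not> ?thesis"
  define Wsp where "Wsp = {y. \<forall>s\<in>S. bf G s y = 0}"
  have iso: "bf G y y = 0" if "y \<in> Wsp" for y using neg that unfolding Wsp_def by blast
  define gv where "gv s = (\<chi> i. \<Sum>j\<in>UNIV. G i j * s$j)" for s :: "real^4"
  have "dim (gv ` S) \<le> card (gv ` S)" using fin by (simp add: dim_le_card')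
  also have "\<dots> \<le> card S" using fin by (rule card_image_le)
  finally have "dim (gv ` S) < DIM(real^4)" using card by simp
  then obtain x :: "real^4" where x0: "x \<noteq> 0" and xo: "\<And>y. y \<in> span (gv ` S) \<Longrightarrow> orthogonal x y"
    using orthogonal_to_subspace_exists by blast
  have xW: "x \<in> Wsp"
  proof -
    have "bf G s x = 0" if "s \<in> S" for s
    proof -
      have "orthogonal x (gv s)" using xo that by (simp add: span_base)
      then have "(\<Sum>i\<in>UNIV. x$i * (\<Sum>j\<in>UNIV. G i j * s$j)) = 0"
        unfolding orthogonal_def inner_vec_def gv_def by simp
      then have "bf G x s = 0" unfolding bf_def by (simp add: sum_distrib_left mult_ac)
      then show ?thesis using bf_sym[OF Gs, where u=x and v=s] by simp
    qed
    then show ?thesis unfolding Wsp_def by blast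
  qed
  have "bf G x z = 0" for z
  proof -
    define z' where "z' = z - (\<Sum>s\<in>S. (bf G s z / bf G s s) *\<^sub>R s)"
    have bz: "bf G t z' = 0" if t: "t \<in> S" for t
    proof -
      have "(\<Sum>s\<in>S. bf G t ((bf G s z / bf G s s) *\<^sub>R s)) = (\<Sum>s\<in>S. if s = t then bf G t z else 0)"
      proof (rule sum.cong)
        fix s assume s: "s \<in> S"
        show "bf G t ((bf G s z / bf G s s) *\<^sub>R s) = (if s = t then bf G t z else 0)"
        proof (cases "s = t")
          case True then show ?thesis using nn[OF t] by (simp add: bf_scale2)
        next
          case False then show ?thesis using orth[OF t s] by (simp add: bf_scale2)
        qed
      qed simp
      then show ?thesis unfolding z'_def using fin t by (simp add: bf_diff2 bf_sum2)
    qed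
    then have z'W: "z' \<in> Wsp" unfolding Wsp_def by blast
    have "x + z' \<in> Wsp" using xW z'W unfolding Wsp_def by (simp add: bf_add2)
    then have "bf G (x + z') (x + z') = 0" by (rule iso)
    then have "bf G x x + bf G x z' + bf G z' x + bf G z' z' = 0"
      by (simp add: bf_add1 bf_add2)
    then have xz': "bf G x z' = 0" using iso[OF xW] iso[OF z'W] bf_sym[OF Gs, where u=z' and v=x] by simp
    have "bf G x z = bf G x z' + bf G x (\<Sum>s\<in>S. (bf G s z / bf G s s) *\<^sub>R s)"
      unfolding z'_def by (simp add: bf_diff2)
    also have "bf G x (\<Sum>s\<in>S. (bf G s z / bf G s s) *\<^sub>R s) = 0"
    proof -
      have "bf G x s = 0" if "s \<in> S" for s using xW that bf_sym[OF Gs, where u=x and v=s] unfolding Wsp_def by auto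
      then show ?thesis using fin by (simp add: bf_sum2 bf_scale2)
    qed
    finally show ?thesis using xz' by simp
  qed
  then have "x = 0" by (intro nondeg) auto
  then show False using x0 by simp
qed

end

lemma threeD:
  fixes X :: "4 \<Rightarrow> 4 \<Rightarrow> 4 \<Rightarrow> 4 \<Rightarrow> real" and e :: "4 \<Rightarrow> real"
  assumes a12: "\<And>j k l m. X j k l m = - X k j l m"
    and a34: "\<And>j k l m. X j k l m = - X j k m l"
    and pair: "\<And>j k l m. X j k l m = X l m j k"
    and z4: "\<And>p q r. X p q r 4 = 0"
    and en: "\<And>p. e p \<noteq> 0"
    and tr: "\<And>q r. (\<Sum>p\<in>UNIV. X p q r p / e p) = 0"
  shows "X p q r s = 0"
proof -
  have d12: "X j j l m = 0" for j l m using a12[of j j l m] by simp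
  have d34: "X j k l l = 0" for j k l using a34[of j k l l] by simp
  have var: "X a b c d = 0 \<Longrightarrow> X a b c d = 0 \<and> X b a c d = 0 \<and> X a b d c = 0 \<and> X b a d c = 0
     \<and> X c d a b = 0 \<and> X d c a b = 0 \<and> X c d b a = 0 \<and> X d c b a = 0" for a b c d
    using a12[of a b c d] a34[of a b c d] a34[of b a c d] pair[of a b c d] a12[of c d a b] a34[of c d a b] a34[of d c a b]
    by simp
  have z4': "X 4 q r s = 0" "X q 4 r s = 0" "X q r 4 s = 0" for q r s
    using var[OF z4[of r s q]] var[OF z4[of q r s]] by auto
  have t: "X 1 q r 1 / e 1 + X 2 q r 2 / e 2 + X 3 q r 3 / e 3 = 0" for q r
    using tr[of q r] z4'(1)[of q r 4] by (simp add: sum_4)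
  define u where "u = X 1 2 1 2"
  define v where "v = X 1 3 1 3"
  define w where "w = X 2 3 2 3"
  have x1: "X 2 1 1 2 = - u" "X 3 1 1 3 = - v" "X 1 2 2 1 = - u" "X 3 2 2 3 = - w" "X 1 3 3 1 = - v" "X 2 3 3 2 = - w"
    unfolding u_def v_def w_def using var by (metis a12 a34)+
  have e1: "u / e 2 + v / e 3 = 0" using t[of 1 1] d12[of 1] x1 by simp
  have e2: "u / e 1 + w / e 3 = 0" using t[of 2 2] d12[of 2] x1 by simp
  have e3: "v / e 1 + w / e 2 = 0" using t[of 3 3] d12[of 3] x1 by simp
  have "2 * u * (1 / e 1) * (1 / e 2) = (u / e 2 + v / e 3) * (1 / e 1) + (u / e 1 + w / e 3) * (1 / e 2) - (v / e 1 + w / e 2) * (1 / e 3)"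
    using en[of 1] en[of 2] en[of 3] by (simp add: field_simps)
  then have "2 * u * (1 / e 1) * (1 / e 2) = 0" using e1 e2 e3 by simp
  then have u0: "u = 0" using en by simp
  then have v0: "v = 0" using e1 en by simp
  have w0: "w = 0" using e2 u0 en by simp
  have o1: "X 3 1 2 3 = 0" using t[of 1 2] d12[of 1 2 1] d34[of 2 1 2] en[of 3] by simp
  have o2: "X 2 1 3 2 = 0" using t[of 1 3] d12[of 1 3 1] d34[of 3 1 3] en[of 2] by simp
  have o3: "X 1 2 3 1 = 0" using t[of 2 3] d12[of 2 3 2] d34[of 3 2 3] en[of 1] by simp
  note Z = var[OF u0[unfolded u_def]] var[OF v0[unfolded v_def]] var[OF w0[unfolded w_def]]
    var[OF o1] var[OF o2] var[OF o3] d12 d34 z4' z4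
  have "\<forall>p q r s. X p q r s = 0"
    unfolding forall_4 using Z by simp
  then show ?thesis by blast
qed


lemma sum4_tuple: "(\<Sum>j\<in>UNIV. \<Sum>k\<in>UNIV. \<Sum>l\<in>UNIV. \<Sum>m\<in>UNIV. f j k l m) = (\<Sum>(j,k,l,m)\<in>UNIV. (f j k l m :: real))"
  for f :: "'a::finite \<Rightarrow> 'b::finite \<Rightarrow> 'c::finite \<Rightarrow> 'd::finite \<Rightarrow> real"
  by (simp only: sum.cartesian_product UNIV_Times_UNIV split_def)

context fixes f :: "4 \<Rightarrow> 4 \<Rightarrow> 4 \<Rightarrow> 4 \<Rightarrow> real" begin
lemma T_mlkj: "(\<Sum>(m,l,k,j)\<in>UNIV. f j k l m) = (\<Sum>(j,k,l,m)\<in>UNIV. f j k l m)"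
  by (rule sum.reindex_bij_witness[where i="\<lambda>(j,k,l,m). (m,l,k,j)" and j="\<lambda>(m,l,k,j). (j,k,l,m)"]) auto
lemma T_kljm: "(\<Sum>(k,l,j,m)\<in>UNIV. f j k l m) = (\<Sum>(j,k,l,m)\<in>UNIV. f j k l m)"
  by (rule sum.reindex_bij_witness[where i="\<lambda>(j,k,l,m). (k,l,j,m)" and j="\<lambda>(k,l,j,m). (j,k,l,m)"]) auto
lemma T_12: "(\<Sum>(j,k,l,m)\<in>UNIV. f j k l m) = (\<Sum>(j,k,l,m)\<in>UNIV. f k j l m)"
  by (rule sum.reindex_bij_witness[where i="\<lambda>(j,k,l,m). (k,j,l,m)" and j="\<lambda>(j,k,l,m). (k,j,l,m)"]) auto
lemma T_34: "(\<Sum>(j,k,l,m)\<in>UNIV. f j k l m) = (\<Sum>(j,k,l,m)\<in>UNIV. f j k m l)"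
  by (rule sum.reindex_bij_witness[where i="\<lambda>(j,k,l,m). (j,k,m,l)" and j="\<lambda>(j,k,l,m). (j,k,m,l)"]) auto
lemma T_pair: "(\<Sum>(j,k,l,m)\<in>UNIV. f j k l m) = (\<Sum>(j,k,l,m)\<in>UNIV. f l m j k)"
  by (rule sum.reindex_bij_witness[where i="\<lambda>(j,k,l,m). (l,m,j,k)" and j="\<lambda>(j,k,l,m). (l,m,j,k)"]) auto
end

lemma inv_step:
  fixes V U :: "4 \<Rightarrow> 4 \<Rightarrow> real" and X :: "4 \<Rightarrow> real"
  assumes VU: "\<And>j j'. (\<Sum>p\<in>UNIV. V j p * U p j') = (if j = j' then 1 else 0)"
    and X: "\<And>p. (\<Sum>j\<in>UNIV. X j * V j p) = 0"
  shows "X j' = 0"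
proof -
  have "X j' = (\<Sum>j\<in>UNIV. (if j = j' then 1 else 0) * X j)" by (simp only: sumd2)
  also have "\<dots> = (\<Sum>j\<in>UNIV. \<Sum>p\<in>UNIV. U p j' * (X j * V j p))"
    by (simp add: VU[symmetric] sum_distrib_right sum_distrib_left mult_ac)
  also have "\<dots> = (\<Sum>p\<in>UNIV. \<Sum>j\<in>UNIV. U p j' * (X j * V j p))" by (rule sum.swap)
  also have "\<dots> = (\<Sum>p\<in>UNIV. U p j' * (\<Sum>j\<in>UNIV. X j * V j p))" by (simp add: sum_distrib_left)
  also have "\<dots> = 0" by (simp add: X)
  finally show ?thesis .
qed

lemma null_lemma:
  fixes W :: "4 \<Rightarrow> 4 \<Rightarrow> 4 \<Rightarrow> 4 \<Rightarrow> real" and G H :: "4 \<Rightarrow> 4 \<Rightarrow> real" and a :: "real^4"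
  assumes Gs: "\<And>a b. G a b = G b a"
    and HG: "\<And>a b. (\<Sum>k\<in>UNIV. H a k * G k b) = (if a = b then 1 else 0)"
    and GH: "\<And>a b. (\<Sum>k\<in>UNIV. G a k * H k b) = (if a = b then 1 else 0)"
    and a12: "\<And>j k l m. W j k l m = - W k j l m"
    and a34: "\<And>j k l m. W j k l m = - W j k m l"
    and pair: "\<And>j k l m. W j k l m = W l m j k"
    and tr: "\<And>k l. (\<Sum>j\<in>UNIV. \<Sum>m\<in>UNIV. H j m * W j k l m) = 0"
    and ka: "\<And>j k l. (\<Sum>m\<in>UNIV. W j k l m * a$m) = 0"
    and na: "bf G a a \<noteq> 0"
  shows "W j k l m = 0"
proof -
  have bs: "bf G u v = bf G v u" for u v by (rule bf_sym[OF Gs])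
  obtain v1 where v1: "bf G v1 v1 \<noteq> 0" "bf G a v1 = 0"
    using ext_orth[OF Gs HG, of "{a}"] na by auto
  have av1: "a \<noteq> v1" using v1 na by auto
  obtain v2 where v2: "bf G v2 v2 \<noteq> 0" "bf G a v2 = 0" "bf G v1 v2 = 0"
  proof -
    have "\<exists>x. bf G x x \<noteq> 0 \<and> (\<forall>s\<in>{a, v1}. bf G s x = 0)"
    proof (rule ext_orth[OF Gs HG])
      show "card {a, v1} < 4" using av1 by simp
      show "bf G s t = 0" if "s \<in> {a, v1}" "t \<in> {a, v1}" "s \<noteq> t" for s t
        using that v1 bs[of v1 a] by auto
    qed (use na v1 in auto)
    then show ?thesis using that by auto
  qed
  have av2: "a \<noteq> v2" "v1 \<noteq> v2" using v2 v1 na by auto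
  obtain v3 where v3: "bf G v3 v3 \<noteq> 0" "bf G a v3 = 0" "bf G v1 v3 = 0" "bf G v2 v3 = 0"
  proof -
    have "\<exists>x. bf G x x \<noteq> 0 \<and> (\<forall>s\<in>{a, v1, v2}. bf G s x = 0)"
    proof (rule ext_orth[OF Gs HG])
      show "card {a, v1, v2} < 4" using av1 av2 by simp
      show "bf G s t = 0" if "s \<in> {a, v1, v2}" "t \<in> {a, v1, v2}" "s \<noteq> t" for s t
        using that v1 v2 bs[of v1 a] bs[of v2 a] bs[of v2 v1] by auto
    qed (use na v1 v2 in auto)
    then show ?thesis using that by auto
  qed
  define vs where "vs p = (if p = 1 then v1 else if p = 2 then v2 else if p = 3 then v3 else a)" for p :: 4
  define e where "e p = bf G (vs p) (vs p)" for p
  have vs4: "vs 4 = a" unfolding vs_def by simp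
  have en: "e p \<noteq> 0" for p
    using exhaust_4[of p] na v1 v2 v3 unfolding e_def vs_def by auto
  have orth: "bf G (vs p) (vs q) = (if p = q then e p else 0)" for p q
    using exhaust_4[of p] exhaust_4[of q] v1 v2 v3 bs[of v1 a] bs[of v2 a] bs[of v3 a]
      bs[of v2 v1] bs[of v3 v1] bs[of v3 v2]
    unfolding e_def vs_def by auto
  define Vm :: "real^4^4" where "Vm = (\<chi> j p. vs p $ j)"
  define Gm :: "real^4^4" where "Gm = (\<chi> i j. G i j)"
  define Hm :: "real^4^4" where "Hm = (\<chi> i j. H i j)"
  define Dg :: "real^4^4" where "Dg = (\<chi> p q. if p = q then e p else 0)"
  define Di :: "real^4^4" where "Di = (\<chi> p q. if p = q then 1 / e p else 0)"
  have VGV: "transpose Vm ** Gm ** Vm = Dg"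
  proof -
    have "(transpose Vm ** Gm ** Vm) $ p $ q = bf G (vs p) (vs q)" for p q
      unfolding bf_right Vm_def Gm_def by (simp add: matrix_matrix_mult_def transpose_def)
    then show ?thesis unfolding Dg_def by (simp add: vec_eq_iff orth)
  qed
  have "det Dg = prod e UNIV" unfolding Dg_def by (subst det_diagonal) auto
  then have "det Dg \<noteq> 0" using en by simp
  then have "det Vm * det Gm * det Vm \<noteq> 0" unfolding VGV[symmetric] by (simp add: det_mul)
  then have "det Vm \<noteq> 0" by auto
  then obtain U where VU: "Vm ** U = mat 1" and UV: "U ** Vm = mat 1"
    using invertible_det_nz[of Vm] unfolding invertible_def by blast
  have GmHm: "Gm ** Hm = mat 1"
    unfolding Gm_def Hm_def by (simp add: vec_eq_iff matrix_matrix_mult_def mat_def GH)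
  have DiD: "Di ** Dg = mat 1"
  proof -
    have "(Di ** Dg) $ p $ q = (if p = q then 1 else 0)" for p q
    proof -
      have "(Di ** Dg) $ p $ q = (\<Sum>r\<in>UNIV. (if p = r then 1 / e p else 0) * (if r = q then e r else 0))"
        unfolding Di_def Dg_def by (simp add: matrix_matrix_mult_def)
      also have "\<dots> = (\<Sum>r\<in>UNIV. if r = p then (if p = q then 1 else 0) else 0)"
        by (rule sum.cong) (use en in auto)
      finally show ?thesis by simp
    qed
    then show ?thesis by (simp add: vec_eq_iff mat_def)
  qed
  define M where "M = Vm ** Di ** transpose Vm"
  have "M ** Gm ** Vm = Vm ** Di ** (transpose Vm ** Gm ** Vm)"
    unfolding M_def by (simp add: matrix_mul_assoc)
  also have "\<dots> = Vm" unfolding VGV by (simp add: matrix_mul_assoc[symmetric] DiD)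
  finally have MGV: "M ** Gm ** Vm = Vm" .
  have MG: "M ** Gm = mat 1"
  proof -
    have "M ** Gm = M ** Gm ** (Vm ** U)" by (simp add: VU)
    also have "\<dots> = (M ** Gm ** Vm) ** U" by (simp add: matrix_mul_assoc)
    finally show ?thesis using MGV VU by simp
  qed
  have HM: "Hm = M"
  proof -
    have "Hm = (M ** Gm) ** Hm" by (simp add: MG)
    also have "\<dots> = M" by (simp add: matrix_mul_assoc[symmetric] GmHm)
    finally show ?thesis .
  qed
  have Hf: "H j m = (\<Sum>p\<in>UNIV. vs p $ j * vs p $ m / e p)" for j m
  proof -
    have "H j m = M $ j $ m" using HM unfolding Hm_def by (metis vec_lambda_beta)
    also have "\<dots> = (\<Sum>q\<in>UNIV. (\<Sum>p\<in>UNIV. vs p $ j * (if p = q then 1 / e p else 0)) * vs q $ m)"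
      unfolding M_def Vm_def Di_def by (simp add: matrix_matrix_mult_def transpose_def)
    also have "\<dots> = (\<Sum>q\<in>UNIV. vs q $ j * vs q $ m / e q)"
    proof (rule sum.cong)
      fix q
      have "(\<Sum>p\<in>UNIV. vs p $ j * (if p = q then 1 / e p else 0)) = (\<Sum>p\<in>UNIV. if p = q then vs q $ j / e q else 0)"
        by (rule sum.cong) auto
      then show "(\<Sum>p\<in>UNIV. vs p $ j * (if p = q then 1 / e p else 0)) * vs q $ m = vs q $ j * vs q $ m / e q"
        by simp
    qed simp
    finally show ?thesis .
  qed
  have VUc: "(\<Sum>p\<in>UNIV. vs p $ j * U $ p $ j') = (if j = j' then 1 else 0)" for j j'
  proof -
    have "(Vm ** U) $ j $ j' = (if j = j' then 1 else 0)" using VU by (simp add: mat_def)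
    then show ?thesis unfolding Vm_def by (simp add: matrix_matrix_mult_def)
  qed
  define V where "V j p = vs p $ j" for j p
  define Wn where "Wn p q r s = (\<Sum>m\<in>UNIV. (\<Sum>l\<in>UNIV. (\<Sum>k\<in>UNIV. (\<Sum>j\<in>UNIV. W j k l m * V j p) * V k q) * V l r) * V m s)" for p q r s
  have Wt: "Wn p q r s = (\<Sum>(j,k,l,m)\<in>UNIV. W j k l m * V j p * V k q * V l r * V m s)" for p q r s
  proof -
    have "Wn p q r s = (\<Sum>m\<in>UNIV. \<Sum>l\<in>UNIV. \<Sum>k\<in>UNIV. \<Sum>j\<in>UNIV. W j k l m * V j p * V k q * V l r * V m s)"
      unfolding Wn_def by (simp add: sum_distrib_right)
    also have "\<dots> = (\<Sum>(m,l,k,j)\<in>UNIV. W j k l m * V j p * V k q * V l r * V m s)"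
      by (rule sum4_tuple)
    also have "\<dots> = (\<Sum>(j,k,l,m)\<in>UNIV. W j k l m * V j p * V k q * V l r * V m s)"
      by (rule T_mlkj)
    finally show ?thesis .
  qed
  have Wa12: "Wn p q r s = - Wn q p r s" for p q r s
  proof -
    have "Wn q p r s = (\<Sum>(j,k,l,m)\<in>UNIV. W k j l m * V k q * V j p * V l r * V m s)"
      unfolding Wt by (rule T_12)
    also have "\<dots> = (\<Sum>(j,k,l,m)\<in>UNIV. - (W j k l m * V j p * V k q * V l r * V m s))"
    proof -
      have pw: "W k j l m * V k q * V j p * V l r * V m s = - (W j k l m * V j p * V k q * V l r * V m s)" for j k l m
        using a12[of k j l m] by (simp add: mult_ac)
      show ?thesis by (rule sum.cong[OF refl]) (simp add: pw split_paired_all)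
    qed
    finally show ?thesis unfolding Wt by (simp add: sum_negf case_prod_beta)
  qed
  have Wa34: "Wn p q r s = - Wn p q s r" for p q r s
  proof -
    have "Wn p q s r = (\<Sum>(j,k,l,m)\<in>UNIV. W j k m l * V j p * V k q * V m s * V l r)"
      unfolding Wt by (rule T_34)
    also have "\<dots> = (\<Sum>(j,k,l,m)\<in>UNIV. - (W j k l m * V j p * V k q * V l r * V m s))"
    proof -
      have pw: "W j k m l * V j p * V k q * V m s * V l r = - (W j k l m * V j p * V k q * V l r * V m s)" for j k l m
        using a34[of j k m l] by (simp add: mult_ac)
      show ?thesis by (rule sum.cong[OF refl]) (simp add: pw split_paired_all)
    qed
    finally show ?thesis unfolding Wt by (simp add: sum_negf case_prod_beta)
  qed
  have Wpair: "Wn p q r s = Wn r s p q" for p q r s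
  proof -
    have "Wn r s p q = (\<Sum>(j,k,l,m)\<in>UNIV. W l m j k * V l r * V m s * V j p * V k q)"
      unfolding Wt by (rule T_pair)
    also have "\<dots> = (\<Sum>(j,k,l,m)\<in>UNIV. W j k l m * V j p * V k q * V l r * V m s)"
    proof -
      have pw: "W l m j k * V l r * V m s * V j p * V k q = W j k l m * V j p * V k q * V l r * V m s" for j k l m
        using pair[of l m j k] by (simp add: mult_ac)
      show ?thesis by (rule sum.cong[OF refl]) (simp add: pw split_paired_all)
    qed
    finally show ?thesis unfolding Wt by simp
  qed
  have Wz4: "Wn p q r 4 = 0" for p q r
  proof -
    have "Wn p q r 4 = (\<Sum>j\<in>UNIV. \<Sum>k\<in>UNIV. \<Sum>l\<in>UNIV. \<Sum>m\<in>UNIV. W j k l m * V j p * V k q * V l r * V m 4)"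
      unfolding Wt by (rule sum4_tuple[symmetric])
    also have "\<dots> = 0"
    proof -
      have "(\<Sum>m\<in>UNIV. W j k l m * V j p * V k q * V l r * V m 4) = 0" for j k l
      proof -
        have "(\<Sum>m\<in>UNIV. W j k l m * V j p * V k q * V l r * V m 4) = V j p * V k q * V l r * (\<Sum>m\<in>UNIV. W j k l m * a$m)"
          unfolding V_def vs4 by (simp add: sum_distrib_left mult_ac)
        then show ?thesis using ka by simp
      qed
      then show ?thesis by simp
    qed
    finally show ?thesis .
  qed
  have Wtr: "(\<Sum>p\<in>UNIV. Wn p q r p / e p) = 0" for q r
  proof -
    have w2: "Wn p q r p = (\<Sum>(k,l,j,m)\<in>UNIV. W j k l m * V j p * V k q * V l r * V m p)" for p
      unfolding Wt by (rule T_kljm[symmetric])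
    have "(\<Sum>p\<in>UNIV. Wn p q r p / e p) = (\<Sum>p\<in>UNIV. \<Sum>x\<in>UNIV. (case x of (k,l,j,m) \<Rightarrow> W j k l m * V j p * V k q * V l r * V m p / e p))"
      unfolding w2 by (simp add: sum_divide_distrib case_prod_beta)
    also have "\<dots> = (\<Sum>x\<in>UNIV. \<Sum>p\<in>UNIV. (case x of (k,l,j,m) \<Rightarrow> W j k l m * V j p * V k q * V l r * V m p / e p))"
      by (rule sum.swap)
    also have "\<dots> = (\<Sum>(k,l,j,m)\<in>UNIV. V k q * V l r * (H j m * W j k l m))"
    proof (rule sum.cong[OF refl])
      fix x :: "4 \<times> 4 \<times> 4 \<times> 4"
      obtain k l j m where x: "x = (k,l,j,m)" by (cases x) auto
      have "(\<Sum>p\<in>UNIV. W j k l m * V j p * V k q * V l r * V m p / e p) = V k q * V l r * W j k l m * (\<Sum>p\<in>UNIV. vs p $ j * vs p $ m / e p)"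
        unfolding V_def by (simp add: sum_distrib_left mult_ac)
      then show "(\<Sum>p\<in>UNIV. (case x of (k,l,j,m) \<Rightarrow> W j k l m * V j p * V k q * V l r * V m p / e p)) = (case x of (k,l,j,m) \<Rightarrow> V k q * V l r * (H j m * W j k l m))"
        unfolding x by (simp add: Hf[symmetric] mult_ac)
    qed
    also have "\<dots> = (\<Sum>k\<in>UNIV. \<Sum>l\<in>UNIV. \<Sum>j\<in>UNIV. \<Sum>m\<in>UNIV. V k q * V l r * (H j m * W j k l m))"
      by (rule sum4_tuple[symmetric])
    also have "\<dots> = (\<Sum>k\<in>UNIV. \<Sum>l\<in>UNIV. V k q * V l r * (\<Sum>j\<in>UNIV. \<Sum>m\<in>UNIV. H j m * W j k l m))"
      by (simp add: sum_distrib_left)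
    also have "\<dots> = 0" by (simp add: tr)
    finally show ?thesis .
  qed
  have Wn0: "Wn p q r s = 0" for p q r s
    by (rule threeD[where X=Wn and e=e, OF Wa12 Wa34 Wpair Wz4 en Wtr])
  have VUc': "(\<Sum>p\<in>UNIV. V j p * U $ p $ j') = (if j = j' then 1 else 0)" for j j'
    unfolding V_def by (rule VUc)
  have X0: "(\<Sum>l\<in>UNIV. (\<Sum>k\<in>UNIV. (\<Sum>j\<in>UNIV. W j k l m * V j p) * V k q) * V l r) = 0" for p q r m
    by (rule inv_step[where V=V and U="\<lambda>p j. U $ p $ j", OF VUc']) (use Wn0 in \<open>simp add: Wn_def\<close>)
  have Y0: "(\<Sum>k\<in>UNIV. (\<Sum>j\<in>UNIV. W j k l m * V j p) * V k q) = 0" for p q l m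
    by (rule inv_step[where V=V and U="\<lambda>p j. U $ p $ j", OF VUc']) (use X0 in simp)
  have Z0: "(\<Sum>j\<in>UNIV. W j k l m * V j p) = 0" for p k l m
    by (rule inv_step[where V=V and U="\<lambda>p j. U $ p $ j", OF VUc']) (use Y0 in simp)
  show ?thesis
    by (rule inv_step[where V=V and U="\<lambda>p j. U $ p $ j", OF VUc']) (use Z0 in simp)
qed

definition chrg :: "(4 \<Rightarrow> 4 \<Rightarrow> real) \<Rightarrow> (4 \<Rightarrow> 4 \<Rightarrow> 4 \<Rightarrow> real) \<Rightarrow> 4 \<Rightarrow> 4 \<Rightarrow> 4 \<Rightarrow> real" where
  "chrg H DG a b c = (\<Sum>d\<in>UNIV. H a d * Lg DG d b c)"
definition dHg :: "(4 \<Rightarrow> 4 \<Rightarrow> real) \<Rightarrow> (4 \<Rightarrow> 4 \<Rightarrow> 4 \<Rightarrow> real) \<Rightarrow> 4 \<Rightarrow> 4 \<Rightarrow> 4 \<Rightarrow> real" where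
  "dHg H DG l a d = - (\<Sum>p\<in>UNIV. \<Sum>q\<in>UNIV. H a p * DG l p q * H q d)"
definition dchrg :: "(4 \<Rightarrow> 4 \<Rightarrow> real) \<Rightarrow> (4 \<Rightarrow> 4 \<Rightarrow> 4 \<Rightarrow> real) \<Rightarrow> (4 \<Rightarrow> 4 \<Rightarrow> 4 \<Rightarrow> 4 \<Rightarrow> real) \<Rightarrow> 4 \<Rightarrow> 4 \<Rightarrow> 4 \<Rightarrow> 4 \<Rightarrow> real" where
  "dchrg H DG DDG l a b c = (\<Sum>d\<in>UNIV. dHg H DG l a d * Lg DG d b c + H a d * dLg DDG l d b c)"
definition Rupg :: "(4 \<Rightarrow> 4 \<Rightarrow> real) \<Rightarrow> (4 \<Rightarrow> 4 \<Rightarrow> 4 \<Rightarrow> real) \<Rightarrow> (4 \<Rightarrow> 4 \<Rightarrow> 4 \<Rightarrow> 4 \<Rightarrow> real) \<Rightarrow> 4 \<Rightarrow> 4 \<Rightarrow> 4 \<Rightarrow> 4 \<Rightarrow> real" where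
  "Rupg H DG DDG e k l m = dchrg H DG DDG l e m k - dchrg H DG DDG m e l k
   + (\<Sum>p\<in>UNIV. chrg H DG e l p * chrg H DG p m k) - (\<Sum>p\<in>UNIV. chrg H DG e m p * chrg H DG p l k)"

context alg begin

abbreviation "chr \<equiv> chrg H DG"
abbreviation "dH \<equiv> dHg H DG"
abbreviation "dchr \<equiv> dchrg H DG DDG"
abbreviation "Rup \<equiv> Rupg H DG DDG"

lemma Gchr: "(\<Sum>e\<in>UNIV. G j e * chr e b c) = L j b c"
proof -
  have "(\<Sum>e\<in>UNIV. G j e * chr e b c) = (\<Sum>e\<in>UNIV. \<Sum>d\<in>UNIV. G j e * H e d * L d b c)"
    unfolding chrg_def by (simp add: sum_distrib_left mult_ac)
  also have "\<dots> = (\<Sum>d\<in>UNIV. \<Sum>e\<in>UNIV. G j e * H e d * L d b c)" by (rule sum.swap)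
  also have "\<dots> = (\<Sum>d\<in>UNIV. (\<Sum>e\<in>UNIV. G j e * H e d) * L d b c)" by (simp add: sum_distrib_right)
  also have "\<dots> = L j b c" by (simp add: GH sumd1)
  finally show ?thesis .
qed

lemma GdH: "(\<Sum>e\<in>UNIV. G j e * dH l e d) = - (\<Sum>q\<in>UNIV. DG l j q * H q d)"
proof -
  have "(\<Sum>e\<in>UNIV. G j e * dH l e d) = - (\<Sum>e\<in>UNIV. \<Sum>p\<in>UNIV. G j e * H e p * (\<Sum>q\<in>UNIV. DG l p q * H q d))"
    unfolding dHg_def by (simp add: sum_distrib_left mult_ac sum_negf)
  also have "(\<Sum>e\<in>UNIV. \<Sum>p\<in>UNIV. G j e * H e p * (\<Sum>q\<in>UNIV. DG l p q * H q d))
      = (\<Sum>p\<in>UNIV. \<Sum>e\<in>UNIV. G j e * H e p * (\<Sum>q\<in>UNIV. DG l p q * H q d))" by (rule sum.swap)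
  also have "\<dots> = (\<Sum>p\<in>UNIV. (\<Sum>e\<in>UNIV. G j e * H e p) * (\<Sum>q\<in>UNIV. DG l p q * H q d))"
    by (simp add: sum_distrib_right)
  also have "\<dots> = (\<Sum>q\<in>UNIV. DG l j q * H q d)" by (simp add: GH sumd1)
  finally show ?thesis .
qed

lemma Gdchr: "(\<Sum>e\<in>UNIV. G j e * dchr l e b c) = dL l j b c - (\<Sum>q\<in>UNIV. DG l j q * chr q b c)"
proof -
  have "(\<Sum>e\<in>UNIV. G j e * dchr l e b c) = (\<Sum>e\<in>UNIV. \<Sum>d\<in>UNIV. G j e * dH l e d * L d b c + G j e * H e d * dL l d b c)"
    unfolding dchrg_def by (simp add: sum_distrib_left algebra_simps)
  also have "\<dots> = (\<Sum>d\<in>UNIV. \<Sum>e\<in>UNIV. G j e * dH l e d * L d b c + G j e * H e d * dL l d b c)" by (rule sum.swap)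
  also have "\<dots> = (\<Sum>d\<in>UNIV. (\<Sum>e\<in>UNIV. G j e * dH l e d) * L d b c + (\<Sum>e\<in>UNIV. G j e * H e d) * dL l d b c)"
    by (simp add: sum.distrib sum_distrib_right)
  also have "\<dots> = (\<Sum>d\<in>UNIV. - (\<Sum>q\<in>UNIV. DG l j q * H q d) * L d b c) + dL l j b c"
    by (simp add: GdH GH sum.distrib sumd1 sum_subtractf sum_negf)
  also have "(\<Sum>d\<in>UNIV. - (\<Sum>q\<in>UNIV. DG l j q * H q d) * L d b c) = - (\<Sum>q\<in>UNIV. DG l j q * chr q b c)"
  proof -
    have "(\<Sum>d\<in>UNIV. (\<Sum>q\<in>UNIV. DG l j q * H q d) * L d b c) = (\<Sum>d\<in>UNIV. \<Sum>q\<in>UNIV. DG l j q * (H q d * L d b c))"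
      by (simp add: sum_distrib_right sum_distrib_left mult_ac)
    also have "\<dots> = (\<Sum>q\<in>UNIV. \<Sum>d\<in>UNIV. DG l j q * (H q d * L d b c))" by (rule sum.swap)
    also have "\<dots> = (\<Sum>q\<in>UNIV. DG l j q * chr q b c)" unfolding chrg_def by (simp add: sum_distrib_left)
    finally show ?thesis by (simp add: sum_negf)
  qed
  finally show ?thesis by simp
qed

lemma Gchr2: "(\<Sum>e\<in>UNIV. G j e * (\<Sum>p\<in>UNIV. chr e l p * chr p m k)) = (\<Sum>p\<in>UNIV. L j l p * chr p m k)"
proof -
  have "(\<Sum>e\<in>UNIV. G j e * (\<Sum>p\<in>UNIV. chr e l p * chr p m k)) = (\<Sum>e\<in>UNIV. \<Sum>p\<in>UNIV. G j e * chr e l p * chr p m k)"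
    by (simp add: sum_distrib_left mult_ac)
  also have "\<dots> = (\<Sum>p\<in>UNIV. \<Sum>e\<in>UNIV. G j e * chr e l p * chr p m k)" by (rule sum.swap)
  also have "\<dots> = (\<Sum>p\<in>UNIV. (\<Sum>e\<in>UNIV. G j e * chr e l p) * chr p m k)" by (simp add: sum_distrib_right)
  also have "\<dots> = (\<Sum>p\<in>UNIV. L j l p * chr p m k)" by (simp add: Gchr)
  finally show ?thesis .
qed

lemma LDG: "L j l p - DG l j p = - L p j l"
  unfolding Lg_def DGs[of p j l] DGs[of l p j] DGs[of j p l] by (simp add: field_simps)

lemma quadL: "(\<Sum>p\<in>UNIV. L p j l * chr p m k) = (\<Sum>p\<in>UNIV. \<Sum>q\<in>UNIV. H p q * L p j l * L q m k)"
  unfolding chrg_def by (simp add: sum_distrib_left mult_ac)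

lemma riem_eq: "(\<Sum>e\<in>UNIV. G j e * Rup e k l m) = R j k l m"
proof -
  have "(\<Sum>e\<in>UNIV. G j e * Rup e k l m) = (\<Sum>e\<in>UNIV. G j e * dchr l e m k) - (\<Sum>e\<in>UNIV. G j e * dchr m e l k)
     + (\<Sum>e\<in>UNIV. G j e * (\<Sum>p\<in>UNIV. chr e l p * chr p m k)) - (\<Sum>e\<in>UNIV. G j e * (\<Sum>p\<in>UNIV. chr e m p * chr p l k))"
    unfolding Rupg_def by (simp add: algebra_simps sum.distrib sum_subtractf)
  also have "\<dots> = dL l j m k - dL m j l k + (\<Sum>p\<in>UNIV. (L j l p - DG l j p) * chr p m k)
      - (\<Sum>p\<in>UNIV. (L j m p - DG m j p) * chr p l k)"
    unfolding Gdchr Gchr2 by (simp add: algebra_simps sum.distrib sum_subtractf)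
  also have "\<dots> = R j k l m"
    unfolding LDG Rg_def by (simp add: quadL sum_negf)
  finally show ?thesis .
qed

lemma cov_trace:
  fixes T dT :: "4 \<Rightarrow> 4 \<Rightarrow> 4 \<Rightarrow> 4 \<Rightarrow> real"
  assumes trT: "\<And>k l. (\<Sum>j\<in>UNIV. \<Sum>m\<in>UNIV. H j m * T j k l m) = 0"
    and pdtr: "(\<Sum>j\<in>UNIV. \<Sum>m\<in>UNIV. dH i j m * T j k l m + H j m * dT j k l m) = 0"
  shows "(\<Sum>j\<in>UNIV. \<Sum>m\<in>UNIV. H j m * (dT j k l m - (\<Sum>p\<in>UNIV. chr p i j * T p k l m
      + chr p i k * T j p l m + chr p i l * T j k p m + chr p i m * T j k l p))) = 0"
proof -
  have claim: "(\<Sum>q\<in>UNIV. H q m * chr j i q + H j q * chr m i q) = - dH i j m" for j m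
  proof -
    have "(\<Sum>q\<in>UNIV. H q m * chr j i q + H j q * chr m i q)
        = (\<Sum>q\<in>UNIV. \<Sum>d\<in>UNIV. H j d * H q m * L d i q) + (\<Sum>q\<in>UNIV. \<Sum>d\<in>UNIV. H j q * H m d * L d i q)"
      unfolding chrg_def by (simp add: sum.distrib sum_distrib_left mult_ac)
    also have "(\<Sum>q\<in>UNIV. \<Sum>d\<in>UNIV. H j q * H m d * L d i q) = (\<Sum>q\<in>UNIV. \<Sum>d\<in>UNIV. H j d * H q m * L q i d)"
      by (subst sum.swap) (simp add: Hs mult_ac)
    also have "(\<Sum>q\<in>UNIV. \<Sum>d\<in>UNIV. H j d * H q m * L d i q) + (\<Sum>q\<in>UNIV. \<Sum>d\<in>UNIV. H j d * H q m * L q i d)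
        = (\<Sum>q\<in>UNIV. \<Sum>d\<in>UNIV. H j d * H q m * (L d i q + L q i d))"
      by (simp add: sum.distrib algebra_simps)
    also have "\<dots> = (\<Sum>q\<in>UNIV. \<Sum>d\<in>UNIV. H j d * DG i d q * H q m)"
    proof -
      have "L d i q + L q i d = DG i d q" for d q
        unfolding Lg_def DGs[of d q i] DGs[of q i d] DGs[of i q d] by (simp add: field_simps)
      then show ?thesis by (simp add: mult_ac)
    qed
    also have "\<dots> = - dH i j m" unfolding dHg_def by (subst sum.swap) simp
    finally show ?thesis .
  qed
  have t2: "(\<Sum>j\<in>UNIV. \<Sum>m\<in>UNIV. H j m * (\<Sum>p\<in>UNIV. chr p i k * T j p l m)) = 0"
  proof -
    have "(\<Sum>j\<in>UNIV. \<Sum>m\<in>UNIV. H j m * (\<Sum>p\<in>UNIV. chr p i k * T j p l m))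
      = (\<Sum>j\<in>UNIV. \<Sum>m\<in>UNIV. \<Sum>p\<in>UNIV. chr p i k * (H j m * T j p l m))" by (simp add: sum_distrib_left mult_ac)
    also have "\<dots> = (\<Sum>j\<in>UNIV. \<Sum>p\<in>UNIV. \<Sum>m\<in>UNIV. chr p i k * (H j m * T j p l m))"
      by (rule sum.cong[OF refl], rule sum.swap)
    also have "\<dots> = (\<Sum>p\<in>UNIV. \<Sum>j\<in>UNIV. \<Sum>m\<in>UNIV. chr p i k * (H j m * T j p l m))"
      by (rule sum.swap)
    also have "\<dots> = (\<Sum>p\<in>UNIV. chr p i k * (\<Sum>j\<in>UNIV. \<Sum>m\<in>UNIV. H j m * T j p l m))" by (simp add: sum_distrib_left)
    finally show ?thesis by (simp add: trT)
  qed
  have t3: "(\<Sum>j\<in>UNIV. \<Sum>m\<in>UNIV. H j m * (\<Sum>p\<in>UNIV. chr p i l * T j k p m)) = 0"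
  proof -
    have "(\<Sum>j\<in>UNIV. \<Sum>m\<in>UNIV. H j m * (\<Sum>p\<in>UNIV. chr p i l * T j k p m))
      = (\<Sum>j\<in>UNIV. \<Sum>m\<in>UNIV. \<Sum>p\<in>UNIV. chr p i l * (H j m * T j k p m))" by (simp add: sum_distrib_left mult_ac)
    also have "\<dots> = (\<Sum>j\<in>UNIV. \<Sum>p\<in>UNIV. \<Sum>m\<in>UNIV. chr p i l * (H j m * T j k p m))"
      by (rule sum.cong[OF refl], rule sum.swap)
    also have "\<dots> = (\<Sum>p\<in>UNIV. \<Sum>j\<in>UNIV. \<Sum>m\<in>UNIV. chr p i l * (H j m * T j k p m))"
      by (rule sum.swap)
    also have "\<dots> = (\<Sum>p\<in>UNIV. chr p i l * (\<Sum>j\<in>UNIV. \<Sum>m\<in>UNIV. H j m * T j k p m))" by (simp add: sum_distrib_left)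
    finally show ?thesis by (simp add: trT)
  qed
  have s1: "(\<Sum>j\<in>UNIV. \<Sum>m\<in>UNIV. H j m * (\<Sum>p\<in>UNIV. chr p i j * T p k l m))
      = (\<Sum>j\<in>UNIV. \<Sum>m\<in>UNIV. T j k l m * (\<Sum>q\<in>UNIV. H q m * chr j i q))"
  proof -
    have "(\<Sum>j\<in>UNIV. \<Sum>m\<in>UNIV. H j m * (\<Sum>p\<in>UNIV. chr p i j * T p k l m))
      = (\<Sum>j\<in>UNIV. \<Sum>m\<in>UNIV. \<Sum>p\<in>UNIV. T p k l m * (H j m * chr p i j))" by (simp add: sum_distrib_left mult_ac)
    also have "\<dots> = (\<Sum>j\<in>UNIV. \<Sum>p\<in>UNIV. \<Sum>m\<in>UNIV. T p k l m * (H j m * chr p i j))"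
      by (rule sum.cong[OF refl], rule sum.swap)
    also have "\<dots> = (\<Sum>p\<in>UNIV. \<Sum>j\<in>UNIV. \<Sum>m\<in>UNIV. T p k l m * (H j m * chr p i j))"
      by (rule sum.swap)
    also have "\<dots> = (\<Sum>p\<in>UNIV. \<Sum>m\<in>UNIV. \<Sum>j\<in>UNIV. T p k l m * (H j m * chr p i j))"
      by (rule sum.cong[OF refl], rule sum.swap)
    also have "\<dots> = (\<Sum>j\<in>UNIV. \<Sum>m\<in>UNIV. T j k l m * (\<Sum>q\<in>UNIV. H q m * chr j i q))"
      by (simp add: sum_distrib_left)
    finally show ?thesis .
  qed
  have s4: "(\<Sum>j\<in>UNIV. \<Sum>m\<in>UNIV. H j m * (\<Sum>p\<in>UNIV. chr p i m * T j k l p))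
      = (\<Sum>j\<in>UNIV. \<Sum>m\<in>UNIV. T j k l m * (\<Sum>q\<in>UNIV. H j q * chr m i q))"
  proof -
    have "(\<Sum>j\<in>UNIV. \<Sum>m\<in>UNIV. H j m * (\<Sum>p\<in>UNIV. chr p i m * T j k l p))
      = (\<Sum>j\<in>UNIV. \<Sum>m\<in>UNIV. \<Sum>p\<in>UNIV. T j k l p * (H j m * chr p i m))" by (simp add: sum_distrib_left mult_ac)
    also have "\<dots> = (\<Sum>j\<in>UNIV. \<Sum>p\<in>UNIV. \<Sum>m\<in>UNIV. T j k l p * (H j m * chr p i m))"
      by (rule sum.cong[OF refl], rule sum.swap)
    also have "\<dots> = (\<Sum>j\<in>UNIV. \<Sum>m\<in>UNIV. T j k l m * (\<Sum>q\<in>UNIV. H j q * chr m i q))"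
      by (simp add: sum_distrib_left)
    finally show ?thesis .
  qed
  have "(\<Sum>j\<in>UNIV. \<Sum>m\<in>UNIV. H j m * (dT j k l m - (\<Sum>p\<in>UNIV. chr p i j * T p k l m
      + chr p i k * T j p l m + chr p i l * T j k p m + chr p i m * T j k l p)))
    = (\<Sum>j\<in>UNIV. \<Sum>m\<in>UNIV. H j m * dT j k l m)
      - (\<Sum>j\<in>UNIV. \<Sum>m\<in>UNIV. H j m * (\<Sum>p\<in>UNIV. chr p i j * T p k l m))
      - (\<Sum>j\<in>UNIV. \<Sum>m\<in>UNIV. H j m * (\<Sum>p\<in>UNIV. chr p i k * T j p l m))
      - (\<Sum>j\<in>UNIV. \<Sum>m\<in>UNIV. H j m * (\<Sum>p\<in>UNIV. chr p i l * T j k p m))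
      - (\<Sum>j\<in>UNIV. \<Sum>m\<in>UNIV. H j m * (\<Sum>p\<in>UNIV. chr p i m * T j k l p))"
    by (simp add: sum.distrib sum_subtractf algebra_simps)
  also have "\<dots> = (\<Sum>j\<in>UNIV. \<Sum>m\<in>UNIV. H j m * dT j k l m)
      - (\<Sum>j\<in>UNIV. \<Sum>m\<in>UNIV. T j k l m * (\<Sum>q\<in>UNIV. H q m * chr j i q + H j q * chr m i q))"
    unfolding s1 s4 t2 t3 by (simp add: sum.distrib algebra_simps)
  also have "\<dots> = (\<Sum>j\<in>UNIV. \<Sum>m\<in>UNIV. H j m * dT j k l m) + (\<Sum>j\<in>UNIV. \<Sum>m\<in>UNIV. dH i j m * T j k l m)"
    unfolding claim by (simp add: sum_negf mult_ac)
  also have "\<dots> = 0" using pdtr by (simp add: sum.distrib add.commute)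
  finally show ?thesis .
qed

end

lemma differentiable_prod':
  fixes f :: "'i \<Rightarrow> real^4 \<Rightarrow> real"
  assumes "\<And>i. i \<in> I \<Longrightarrow> f i differentiable (at x)"
  shows "(\<lambda>x. \<Prod>i\<in>I. f i x) differentiable (at x)"
proof -
  have "\<And>i. i \<in> I \<Longrightarrow> (f i has_derivative frechet_derivative (f i) (at x)) (at x)"
    using assms frechet_derivative_works by blast
  then have "((\<lambda>x. \<Prod>i\<in>I. f i x) has_derivative (\<lambda>y. \<Sum>i\<in>I. frechet_derivative (f i) (at x) y * (\<Prod>j\<in>I - {i}. f j x))) (at x)"
    by (rule has_derivative_prod)
  then show ?thesis by (rule differentiableI)
qed

lemma det_differentiable:
  fixes F :: "real^4 \<Rightarrow> real^4^4"
  assumes "\<And>i j. (\<lambda>z. F z $ i $ j) differentiable (at y)"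
  shows "(\<lambda>z. det (F z)) differentiable (at y)"
  unfolding det_def
  apply (rule differentiable_sum)
   apply (simp add: finite_permutations)
  apply (intro ballI differentiable_mult differentiable_const differentiable_prod' assms)
  done

lemma pd_divc: "f differentiable (at x) \<Longrightarrow> pd (\<lambda>y. f y / c) i x = pd f i x / c"
  using pd_cmult[of f x "1/c" i] by (simp add: divide_inverse mult.commute)

locale geo =
  fixes U :: "(real^4) set" and g :: "real^4 \<Rightarrow> real^4^4"
  assumes Uo: "open U" and lor: "lorentzian_metric_on U g"
begin

definition "Gy y a b = g y $ a $ b"
definition "Hy y a b = ginv g y a b"
definition "DGy y c a b = pd (\<lambda>z. g z $ a $ b) c y"
definition "DDGy y d c a b = pd (\<lambda>z. pd (\<lambda>w. g w $ a $ b) c z) d y"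

lemma gsym: "y \<in> U \<Longrightarrow> g y $ a $ b = g y $ b $ a"
proof -
  assume "y \<in> U"
  then have "transpose (g y) = g y" using lor unfolding lorentzian_metric_on_def by blast
  then have "transpose (g y) $ b $ a = g y $ b $ a" by simp
  then show ?thesis by (simp add: transpose_def)
qed

lemma det_mink: "det minkowski \<noteq> 0"
proof -
  have "det minkowski = prod (\<lambda>i. minkowski $ i $ i) UNIV"
    by (rule det_diagonal) (simp add: minkowski_def)
  moreover have "prod (\<lambda>i. minkowski $ i $ i) UNIV \<noteq> 0" by (simp add: minkowski_def)
  ultimately show ?thesis by simp
qed

lemma det_g: "y \<in> U \<Longrightarrow> det (g y) \<noteq> 0"
proof -
  assume "y \<in> U"
  then obtain P where P: "invertible P" "g y = transpose P ** minkowski ** P"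
    using lor unfolding lorentzian_metric_on_def by blast
  have "det P \<noteq> 0" using P(1) invertible_det_nz by blast
  then show ?thesis using P(2) det_mink by (simp add: det_mul)
qed

lemma ginv_inv: assumes "y \<in> U"
  shows "matrix_inv (g y) ** g y = mat 1" "g y ** matrix_inv (g y) = mat 1"
proof -
  have "invertible (g y)" using det_g[OF assms] invertible_det_nz by blast
  then have "\<exists>A'. g y ** A' = mat 1 \<and> A' ** g y = mat 1" unfolding invertible_def by blast
  then have "g y ** matrix_inv (g y) = mat 1 \<and> matrix_inv (g y) ** g y = mat 1"
    unfolding matrix_inv_def by (rule someI_ex)
  then show "matrix_inv (g y) ** g y = mat 1" "g y ** matrix_inv (g y) = mat 1" by auto
qed

lemma HG_y: "y \<in> U \<Longrightarrow> (\<Sum>k\<in>UNIV. ginv g y a k * g y $ k $ b) = (if a = b then 1 else 0)"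
  using ginv_inv(1)[of y] unfolding ginv_def
  by (simp add: vec_eq_iff matrix_matrix_mult_def mat_def)

lemma GH_y: "y \<in> U \<Longrightarrow> (\<Sum>k\<in>UNIV. g y $ a $ k * ginv g y k b) = (if a = b then 1 else 0)"
  using ginv_inv(2)[of y] unfolding ginv_def
  by (simp add: vec_eq_iff matrix_matrix_mult_def mat_def)

lemma Hsym: assumes "y \<in> U" shows "ginv g y a b = ginv g y b a"
proof -
  let ?A = "g y" and ?M = "matrix_inv (g y)"
  have tA: "transpose ?A = ?A" using lor assms unfolding lorentzian_metric_on_def by blast
  have "transpose ?M ** ?A = mat 1"
  proof -
    have "transpose ?M ** ?A = transpose ?M ** transpose ?A" by (simp add: tA)
    also have "\<dots> = transpose (?A ** ?M)" by (simp add: matrix_transpose_mul)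
    also have "\<dots> = mat 1" by (simp add: ginv_inv(2)[OF assms])
    finally show ?thesis .
  qed
  then have "?M = transpose ?M"
  proof -
    assume L: "transpose ?M ** ?A = mat 1"
    have "?M = (transpose ?M ** ?A) ** ?M" by (simp add: L)
    also have "\<dots> = transpose ?M ** (?A ** ?M)" by (simp add: matrix_mul_assoc)
    also have "\<dots> = transpose ?M" by (simp add: ginv_inv(2)[OF assms])
    finally show ?thesis .
  qed
  then have "?M $ a $ b = transpose ?M $ a $ b" by simp
  then show ?thesis unfolding ginv_def by (simp add: transpose_def)
qed


lemma dat: "f differentiable_on U \<Longrightarrow> y \<in> U \<Longrightarrow> f differentiable (at y)"
  using Uo differentiable_on_eq_differentiable_at by blast

lemma smg: "smooth_fun_on U (\<lambda>x. g x $ a $ b)"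
  using lor unfolding lorentzian_metric_on_def by blast

lemma g_on: "(\<lambda>z. g z $ a $ b) differentiable_on U"
  using smg[of a b] unfolding smooth_fun_on_def by (metis iter_pd.simps(1))
lemma dg_on: "pd (\<lambda>z. g z $ a $ b) c differentiable_on U"
  using smg[of a b] unfolding smooth_fun_on_def by (metis iter_pd.simps)
lemma ddg_on: "pd (pd (\<lambda>z. g z $ a $ b) c) d differentiable_on U"
  using smg[of a b] unfolding smooth_fun_on_def by (metis iter_pd.simps)

lemma g_diff: "y \<in> U \<Longrightarrow> (\<lambda>z. g z $ a $ b) differentiable (at y)"
  by (rule dat[OF g_on])
lemma dg_diff: "y \<in> U \<Longrightarrow> pd (\<lambda>z. g z $ a $ b) c differentiable (at y)"
  by (rule dat[OF dg_on])
lemma ddg_diff: "y \<in> U \<Longrightarrow> pd (pd (\<lambda>z. g z $ a $ b) c) d differentiable (at y)"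
  by (rule dat[OF ddg_on])

lemma clair: "y \<in> U \<Longrightarrow> pd (pd (\<lambda>z. g z $ a $ b) c) d y = pd (pd (\<lambda>z. g z $ a $ b) d) c y"
  by (rule clairaut[OF Uo _ g_on dg_on dg_on ddg_on ddg_on])

lemma cramer_ginv: assumes y: "y \<in> U"
  shows "ginv g y i k = det (\<chi> r c. if c = i then axis k 1 $ r else g y $ r $ c) / det (g y)"
proof -
  let ?A = "g y" and ?M = "matrix_inv (g y)"
  have "?A *v (?M *v axis k 1) = axis k 1"
    by (simp add: matrix_vector_mul_assoc ginv_inv(2)[OF y])
  then have "?M *v axis k 1 = (\<chi> k'. det (\<chi> r c. if c = k' then axis k 1 $ r else ?A $ r $ c) / det ?A)"
    using cramer[OF det_g[OF y]] by blast
  then have "(?M *v axis k 1) $ i = det (\<chi> r c. if c = i then axis k 1 $ r else ?A $ r $ c) / det ?A"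
    by simp
  moreover have "(?M *v axis k 1) $ i = ?M $ i $ k"
    by (simp add: matrix_vector_mult_basis column_def)
  ultimately show ?thesis unfolding ginv_def by simp
qed

lemma ginv_diff: assumes y: "y \<in> U" shows "(\<lambda>z. ginv g z a b) differentiable (at y)"
proof -
  let ?F = "\<lambda>z. det (\<chi> r c. if c = a then axis b 1 $ r else g z $ r $ c) / det (g z)"
  have ent: "(\<lambda>z. (\<chi> r c. if c = a then axis b 1 $ r else g z $ r $ c) $ i $ j) differentiable (at y)" for i j
    by (cases "j = a") (simp_all add: g_diff[OF y])
  have "?F differentiable (at y)"
    by (intro differentiable_divide det_differentiable ent g_diff[OF y] det_g[OF y])
  then show ?thesis
    by (rule diff_local[OF Uo y, rotated]) (simp add: cramer_ginv)
qed

lemma pdH: assumes y: "y \<in> U"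
  shows "pd (\<lambda>z. ginv g z a b) c y = - (\<Sum>p\<in>UNIV. \<Sum>q\<in>UNIV. ginv g y a p * pd (\<lambda>z. g z $ p $ q) c y * ginv g y q b)"
proof -
  have E: "(\<Sum>k\<in>UNIV. g y $ p $ k * pd (\<lambda>z. ginv g z k b) c y) = - (\<Sum>k\<in>UNIV. pd (\<lambda>z. g z $ p $ k) c y * ginv g y k b)" for p
  proof -
    have "pd (\<lambda>z. \<Sum>k\<in>UNIV. g z $ p $ k * ginv g z k b) c y = pd (\<lambda>z. if p = b then 1 else 0) c y"
      by (rule pd_local[OF Uo y]) (simp add: GH_y)
    also have "\<dots> = 0" by (rule pd_const)
    finally have "pd (\<lambda>z. \<Sum>k\<in>UNIV. g z $ p $ k * ginv g z k b) c y = 0" .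
    moreover have "pd (\<lambda>z. \<Sum>k\<in>UNIV. g z $ p $ k * ginv g z k b) c y
       = (\<Sum>k\<in>UNIV. pd (\<lambda>z. g z $ p $ k) c y * ginv g y k b + g y $ p $ k * pd (\<lambda>z. ginv g z k b) c y)"
      by (simp add: pd_sum_UNIV pd_mult g_diff[OF y] ginv_diff[OF y])
    ultimately show ?thesis by (simp add: sum.distrib eq_neg_iff_add_eq_0 add.commute)
  qed
  have "pd (\<lambda>z. ginv g z a b) c y = (\<Sum>k\<in>UNIV. (if a = k then 1 else 0) * pd (\<lambda>z. ginv g z k b) c y)"
    by (simp only: sumd1)
  also have "\<dots> = (\<Sum>k\<in>UNIV. (\<Sum>p\<in>UNIV. ginv g y a p * g y $ p $ k) * pd (\<lambda>z. ginv g z k b) c y)"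
    by (simp add: HG_y[OF y])
  also have "\<dots> = (\<Sum>k\<in>UNIV. \<Sum>p\<in>UNIV. ginv g y a p * (g y $ p $ k * pd (\<lambda>z. ginv g z k b) c y))"
    by (simp add: sum_distrib_right sum_distrib_left mult_ac)
  also have "\<dots> = (\<Sum>p\<in>UNIV. \<Sum>k\<in>UNIV. ginv g y a p * (g y $ p $ k * pd (\<lambda>z. ginv g z k b) c y))"
    by (rule sum.swap)
  also have "\<dots> = (\<Sum>p\<in>UNIV. ginv g y a p * (\<Sum>k\<in>UNIV. g y $ p $ k * pd (\<lambda>z. ginv g z k b) c y))"
    by (simp add: sum_distrib_left)
  also have "\<dots> = - (\<Sum>p\<in>UNIV. \<Sum>q\<in>UNIV. ginv g y a p * pd (\<lambda>z. g z $ p $ q) c y * ginv g y q b)"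
    unfolding E by (simp add: sum_distrib_left sum_negf mult_ac)
  finally show ?thesis .
qed

lemma alg_at: assumes y: "y \<in> U" shows "alg (Gy y) (Hy y) (DGy y) (DDGy y)"
proof
  show "Gy y a b = Gy y b a" for a b unfolding Gy_def using gsym[OF y] .
  show "Hy y a b = Hy y b a" for a b unfolding Hy_def using Hsym[OF y] .
  show "(\<Sum>k\<in>UNIV. Hy y a k * Gy y k b) = (if a = b then 1 else 0)" for a b
    unfolding Hy_def Gy_def using HG_y[OF y] .
  show "(\<Sum>k\<in>UNIV. Gy y a k * Hy y k b) = (if a = b then 1 else 0)" for a b
    unfolding Hy_def Gy_def using GH_y[OF y] .
  show "DGy y c a b = DGy y c b a" for c a b
    unfolding DGy_def by (rule pd_local[OF Uo y]) (use gsym in auto)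
  show "DDGy y d c a b = DDGy y d c b a" for d c a b
  proof -
    have "pd (\<lambda>w. g w $ a $ b) c z = pd (\<lambda>w. g w $ b $ a) c z" if "z \<in> U" for z
      by (rule pd_local[OF Uo that]) (use gsym in auto)
    then show ?thesis unfolding DDGy_def by (intro pd_local[OF Uo y]) auto
  qed
  show "DDGy y d c a b = DDGy y c d a b" for d c a b
    unfolding DDGy_def using clair[OF y] by simp
qed
end

context geo begin

lemma chr_eq: "christoffel g y a b c = chrg (Hy y) (DGy y) a b c"
  unfolding christoffel_def chrg_def Lg_def Hy_def DGy_def by (simp add: sum_distrib_left)

lemma dchr_eq: assumes y: "y \<in> U"
  shows "pd (\<lambda>z. christoffel g z a b c) l y = dchrg (Hy y) (DGy y) (DDGy y) l a b c"
proof -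
  define Lf where "Lf d z = (pd (\<lambda>w. g w $ d $ b) c z + pd (\<lambda>w. g w $ d $ c) b z - pd (\<lambda>w. g w $ b $ c) d z) / 2" for d z
  have ch: "(\<lambda>z. christoffel g z a b c) = (\<lambda>z. \<Sum>d\<in>UNIV. ginv g z a d * Lf d z)"
    unfolding christoffel_def Lf_def by (simp add: sum_distrib_left)
  have dLf: "Lf d differentiable (at y)" for d
    unfolding Lf_def by (intro differentiable_divide differentiable_add differentiable_diff dg_diff[OF y]) auto
  have pLf: "pd (Lf d) l y = dLg (DDGy y) l d b c" for d
  proof -
    have "pd (Lf d) l y = (pd (pd (\<lambda>w. g w $ d $ b) c) l y + pd (pd (\<lambda>w. g w $ d $ c) b) l y - pd (pd (\<lambda>w. g w $ b $ c) d) l y) / 2"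
      unfolding Lf_def
      by (simp add: pd_divc pd_add pd_diff dg_diff[OF y] differentiable_add differentiable_diff)
    then show ?thesis unfolding dLg_def DDGy_def by simp
  qed
  have "pd (\<lambda>z. christoffel g z a b c) l y = (\<Sum>d\<in>UNIV. pd (\<lambda>z. ginv g z a d) l y * Lf d y + ginv g y a d * pd (Lf d) l y)"
    unfolding ch by (simp add: pd_sum_UNIV pd_mult ginv_diff[OF y] dLf differentiable_mult)
  also have "\<dots> = dchrg (Hy y) (DGy y) (DDGy y) l a b c"
    unfolding dchrg_def pLf pdH[OF y] dHg_def
    by (simp add: Lf_def Lg_def Hy_def DGy_def)
  finally show ?thesis .
qed

lemma riemup_eq: assumes y: "y \<in> U"
  shows "riem_up g y e k l m = Rupg (Hy y) (DGy y) (DDGy y) e k l m"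
  unfolding riem_up_def Rupg_def dchr_eq[OF y] unfolding chr_eq ..

lemma riem_eq': assumes y: "y \<in> U"
  shows "riem g y j k l m = Rg (Hy y) (DGy y) (DDGy y) j k l m"
proof -
  have "riem g y j k l m = (\<Sum>e\<in>UNIV. Gy y j e * Rupg (Hy y) (DGy y) (DDGy y) e k l m)"
    unfolding riem_def riemup_eq[OF y] Gy_def ..
  also have "\<dots> = Rg (Hy y) (DGy y) (DDGy y) j k l m"
    by (rule alg.riem_eq[OF alg_at[OF y]])
  finally show ?thesis .
qed

lemma ricci_eq: "y \<in> U \<Longrightarrow> ricci g y k l = ricg (Hy y) (DGy y) (DDGy y) k l"
  unfolding ricci_def ricg_def by (simp add: riem_eq' Hy_def)

lemma scal_eq: "y \<in> U \<Longrightarrow> scal g y = scg (Hy y) (DGy y) (DDGy y)"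
  unfolding scal_def scg_def by (simp add: ricci_eq Hy_def)

lemma weyl_eq: "y \<in> U \<Longrightarrow> weyl g y j k l m = Wg (Gy y) (Hy y) (DGy y) (DDGy y) j k l m"
  unfolding weyl_def Wg_def by (simp add: ricci_eq scal_eq riem_eq' Gy_def)

lemma weyl_diff: assumes y: "y \<in> U" shows "(\<lambda>z. weyl g z j k l m) differentiable (at y)"
proof -
  have W: "(\<lambda>z. Wg (Gy z) (Hy z) (DGy z) (DDGy z) j k l m) differentiable (at y)"
    unfolding Wg_def ricg_def scg_def Rg_def dLg_def Lg_def Gy_def Hy_def DGy_def DDGy_def
    by (intro derivative_intros ballI g_diff[OF y] ginv_diff[OF y] dg_diff[OF y] ddg_diff[OF y]) auto
  show ?thesis by (rule diff_local[OF Uo y _ W]) (simp add: weyl_eq)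
qed

end

context geo begin

lemma cov_tr: assumes x: "x \<in> U"
  shows "(\<Sum>j\<in>UNIV. \<Sum>m\<in>UNIV. ginv g x j m * cov_weyl g x i j k l m) = 0"
proof -
  interpret A: alg "Gy x" "Hy x" "DGy x" "DDGy x" by (rule alg_at[OF x])
  have trT: "(\<Sum>j\<in>UNIV. \<Sum>m\<in>UNIV. Hy x j m * weyl g x j k l m) = 0" for k l
    using A.W_trace by (simp add: weyl_eq[OF x])
  have F0: "(\<Sum>j\<in>UNIV. \<Sum>m\<in>UNIV. ginv g y j m * weyl g y j k l m) = 0" if y: "y \<in> U" for y
  proof -
    interpret B: alg "Gy y" "Hy y" "DGy y" "DDGy y" by (rule alg_at[OF y])
    show ?thesis using B.W_trace by (simp add: weyl_eq[OF y] Hy_def)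
  qed
  have "pd (\<lambda>y. \<Sum>j\<in>UNIV. \<Sum>m\<in>UNIV. ginv g y j m * weyl g y j k l m) i x = pd (\<lambda>y. 0) i x"
    by (rule pd_local[OF Uo x]) (simp add: F0)
  then have "pd (\<lambda>y. \<Sum>j\<in>UNIV. \<Sum>m\<in>UNIV. ginv g y j m * weyl g y j k l m) i x = 0"
    by (simp add: pd_const)
  moreover have "pd (\<lambda>y. \<Sum>j\<in>UNIV. \<Sum>m\<in>UNIV. ginv g y j m * weyl g y j k l m) i x
    = (\<Sum>j\<in>UNIV. \<Sum>m\<in>UNIV. pd (\<lambda>y. ginv g y j m) i x * weyl g x j k l m + ginv g x j m * pd (\<lambda>y. weyl g y j k l m) i x)"
    by (simp add: pd_sum_UNIV pd_mult ginv_diff[OF x] weyl_diff[OF x] differentiable_mult differentiable_sum)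
  ultimately have pdtr: "(\<Sum>j\<in>UNIV. \<Sum>m\<in>UNIV. dHg (Hy x) (DGy x) i j m * weyl g x j k l m
      + Hy x j m * pd (\<lambda>y. weyl g y j k l m) i x) = 0"
    by (simp add: pdH[OF x] dHg_def Hy_def DGy_def)
  have "(\<Sum>j\<in>UNIV. \<Sum>m\<in>UNIV. Hy x j m * (pd (\<lambda>y. weyl g y j k l m) i x
      - (\<Sum>p\<in>UNIV. chrg (Hy x) (DGy x) p i j * weyl g x p k l m
      + chrg (Hy x) (DGy x) p i k * weyl g x j p l m + chrg (Hy x) (DGy x) p i l * weyl g x j k p m
      + chrg (Hy x) (DGy x) p i m * weyl g x j k l p))) = 0"
    by (rule A.cov_trace[where T="weyl g x" and dT="\<lambda>j k l m. pd (\<lambda>y. weyl g y j k l m) i x" and i=i and k=k and l=l, OF trT pdtr])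
  then show ?thesis unfolding cov_weyl_def chr_eq Hy_def .
qed

end

theorem mainTheorem14:
  fixes U :: "(real^4) set" and g :: "real^4 \<Rightarrow> real^4^4" and A :: "real^4 \<Rightarrow> real^4"
    and x :: "real^4"
  assumes "open U" and "connected U"
    and "lorentzian_metric_on U g"
    and "\<forall>i. smooth_fun_on U (\<lambda>y. A y $ i)"
    and "CQR4 U g A"
    and "x \<in> U"
    and "\<exists>j k l m. weyl g x j k l m \<noteq> 0"
  shows "(\<Sum>i\<in>UNIV. \<Sum>j\<in>UNIV. ginv g x i j * A x $ i * A x $ j) = 0
         \<and> (\<forall>j k l. (\<Sum>m\<in>UNIV. weyl g x j k l m * raise g x (A x) m) = 0)"
proof -
  interpret geo U g using assms(1,3) by unfold_locales
  have x: "x \<in> U" by fact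
  interpret A: alg "Gy x" "Hy x" "DGy x" "DDGy x" by (rule alg_at[OF x])
  have W: "weyl g x j k l m = Wg (Gy x) (Hy x) (DGy x) (DDGy x) j k l m" for j k l m
    by (rule weyl_eq[OF x])
  have a12: "weyl g x j k l m = - weyl g x k j l m" for j k l m unfolding W by (rule A.W_a12)
  have a34: "weyl g x j k l m = - weyl g x j k m l" for j k l m unfolding W by (rule A.W_a34)
  have cyc: "weyl g x j k l m + weyl g x j l m k + weyl g x j m k l = 0" for j k l m unfolding W by (rule A.W_cyc)
  have pair: "weyl g x j k l m = weyl g x l m j k" for j k l m unfolding W by (rule A.W_pair)
  have tr: "(\<Sum>j\<in>UNIV. \<Sum>m\<in>UNIV. ginv g x j m * weyl g x j k l m) = 0" for k l
    using A.W_trace unfolding W Hy_def .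
  have cqr: "cov_weyl g x i j k l m = 2 * A x $ i * weyl g x j k l m + A x $ j * weyl g x i k l m
        + A x $ k * weyl g x j i l m + A x $ l * weyl g x j k i m + A x $ m * weyl g x j k l i" for i j k l m
    using assms(5) x unfolding CQR4_def by blast
  have hyp: "(\<Sum>j\<in>UNIV. \<Sum>m\<in>UNIV. ginv g x j m * (2 * A x $ i * weyl g x j k l m + A x $ j * weyl g x i k l m
        + A x $ k * weyl g x j i l m + A x $ l * weyl g x j k i m + A x $ m * weyl g x j k l i)) = 0" for i k l
    using cov_tr[OF x, of i k l] unfolding cqr .
  have K: "(\<Sum>m\<in>UNIV. weyl g x j k l m * (\<Sum>p\<in>UNIV. ginv g x m p * A x $ p)) = 0" for j k l
    by (rule cqr_alg[where T="weyl g x" and H="ginv g x" and A="\<lambda>i. A x $ i", OF a12 a34 cyc tr Hsym[OF x] hyp])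
  have second: "\<forall>j k l. (\<Sum>m\<in>UNIV. weyl g x j k l m * raise g x (A x) m) = 0"
    using K unfolding raise_def by blast
  define a :: "real^4" where "a = (\<chi> m. raise g x (A x) m)"
  have first: "(\<Sum>i\<in>UNIV. \<Sum>j\<in>UNIV. ginv g x i j * A x $ i * A x $ j) = 0"
  proof (rule ccontr)
    assume N: "(\<Sum>i\<in>UNIV. \<Sum>j\<in>UNIV. ginv g x i j * A x $ i * A x $ j) \<noteq> 0"
    have Ga: "(\<Sum>j\<in>UNIV. Gy x i j * a $ j) = A x $ i" for i
    proof -
      have "(\<Sum>j\<in>UNIV. Gy x i j * a $ j) = (\<Sum>j\<in>UNIV. \<Sum>p\<in>UNIV. Gy x i j * Hy x j p * A x $ p)"
        unfolding a_def raise_def Hy_def by (simp add: sum_distrib_left mult_ac)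
      also have "\<dots> = (\<Sum>p\<in>UNIV. \<Sum>j\<in>UNIV. Gy x i j * Hy x j p * A x $ p)" by (rule sum.swap)
      also have "\<dots> = (\<Sum>p\<in>UNIV. (\<Sum>j\<in>UNIV. Gy x i j * Hy x j p) * A x $ p)" by (simp add: sum_distrib_right)
      also have "\<dots> = A x $ i" by (simp add: A.GH sumd1)
      finally show ?thesis .
    qed
    have "bf (Gy x) a a = (\<Sum>i\<in>UNIV. a $ i * (\<Sum>j\<in>UNIV. Gy x i j * a $ j))"
      unfolding bf_def by (simp add: sum_distrib_left mult_ac)
    also have "\<dots> = (\<Sum>i\<in>UNIV. \<Sum>j\<in>UNIV. ginv g x i j * A x $ i * A x $ j)"
      unfolding Ga unfolding a_def raise_def by (simp add: sum_distrib_right sum_distrib_left mult_ac)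
    finally have na: "bf (Gy x) a a \<noteq> 0" using N by simp
    have ka: "(\<Sum>m\<in>UNIV. weyl g x j k l m * a $ m) = 0" for j k l
      using second unfolding a_def by simp
    have "weyl g x j k l m = 0" for j k l m
      by (rule null_lemma[where G="Gy x" and H="Hy x", OF A.Gs A.HG A.GH a12 a34 pair _ ka na])
        (use tr in \<open>simp add: Hy_def\<close>)
    then show False using assms(7) by blast
  qed
  show ?thesis using first second by blast
qed

end
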